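(* The polynomials $P_{m,k}(q)$ ($m\ge0$, $0\le k\le m$) and $Q_{m,k}(q)$ ($m\ge1$, $0\le k\le m-1$) have symmetric coefficients.
   Context: A polynomial $a_0+a_1x+\cdots+a_nx^n$ of degree $n$ has symmetric coefficients if $a_i=a_{n-i}$ for $0\le i\le n$. $[k]=\frac{1-q^k}{1-q}$, $[k]!=\prod_{i=1}^k[i]$, $[0]!=1$. Let $S_{m,n}(q)=\sum_{k=1}^n\frac{[2k]}{[2]}[k]^{m-1}q^{\frac{m+1}{2}(n-k)}$. The polynomials $P_{m,j},Q_{m,j}\in\mathbb{Z}[q]$ are those (shown to exist by Guo and Zeng, and uniquely determined) such that for all $n\ge1$: $S_{2m+1,n}(q)=\sum_{k=0}^m(-q^n)^{m-k}\frac{[k]!}{[m+1]!}P_{m,m-k}(q)\frac{([n][n+1])^{k+1}}{[2]}$ for $m\ge0$, and $S_{2m,n}(q)=(1-q^{n+\frac12})\sum_{k=0}^m(-q^n)^{m-k}\frac{(1-q^{\frac12})^{m-k}Q_{m,m-k}(q^{\frac12})}{\prod_{i=0}^{m-k}(1-q^{m-i+\frac12})}\frac{([n][n+1])^k}{[2]}$ for $m\ge1$. *)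

theory Defs
  imports "HOL-Analysis.Analysis" "HOL-Computational_Algebra.Polynomial"
begin

definition qint :: "real \<Rightarrow> nat \<Rightarrow> real" where
  "qint q k = (1 - q ^ k) / (1 - q)"

definition qfact :: "real \<Rightarrow> nat \<Rightarrow> real" where
  "qfact q k = (\<Prod>i=1..k. qint q i)"

definition S :: "nat \<Rightarrow> nat \<Rightarrow> real \<Rightarrow> real" where
  "S m n q = (\<Sum>k=1..n. qint q (2*k) / qint q 2 * qint q k ^ (m - 1)
                * q powr ((real m + 1) / 2 * (real n - real k)))"

definition symmetric_coeffs :: "'a::zero poly \<Rightarrow> bool" where
  "symmetric_coeffs p \<longleftrightarrow> (\<forall>i\<le>degree p. coeff p i = coeff p (degree p - i))"

definition evalZ :: "int poly \<Rightarrow> real \<Rightarrow> real" where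
  "evalZ p x = poly (map_poly real_of_int p) x"

text \<open>The defining identity of the family P_{m,0},...,P_{m,m} (P j stands for P_{m,j}).\<close>
definition P_identity :: "nat \<Rightarrow> (nat \<Rightarrow> int poly) \<Rightarrow> bool" where
  "P_identity m P \<longleftrightarrow>
     (\<forall>n\<ge>1. \<forall>q::real. 0 < q \<and> q < 1 \<longrightarrow>
        S (2*m+1) n q =
          (\<Sum>k=0..m. (- (q ^ n)) ^ (m - k) * qfact q k / qfact q (m+1)
                * evalZ (P (m - k)) q * (qint q n * qint q (n+1)) ^ (k+1) / qint q 2))"

text \<open>The defining identity of the family Q_{m,0},...,Q_{m,m} (Q j stands for Q_{m,j}).\<close>
definition Q_identity :: "nat \<Rightarrow> (nat \<Rightarrow> int poly) \<Rightarrow> bool" where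
  "Q_identity m Q \<longleftrightarrow>
     (\<forall>n\<ge>1. \<forall>q::real. 0 < q \<and> q < 1 \<longrightarrow>
        S (2*m) n q =
          (1 - q powr (real n + 1/2)) *
          (\<Sum>k=0..m. (- (q ^ n)) ^ (m - k) * (1 - q powr (1/2)) ^ (m - k)
                * evalZ (Q (m - k)) (q powr (1/2))
                / (\<Prod>i=0..m-k. (1 - q powr (real (m - i) + 1/2)))
                * (qint q n * qint q (n+1)) ^ k / qint q 2))"

end

theory Submission
  imports Defs "HOL-Computational_Algebra.Formal_Power_Series"
begin


definition polyfun :: "(real \<Rightarrow> real) \<Rightarrow> bool" where
  "polyfun f \<longleftrightarrow> (\<exists>p. \<forall>x. f x = poly p x)"

lemma polyfun_const [intro]: "polyfun (\<lambda>x. c)"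
  unfolding polyfun_def by (rule exI[of _ "[:c:]"]) simp

lemma polyfun_id [intro]: "polyfun (\<lambda>x. x)"
  unfolding polyfun_def by (rule exI[of _ "[:0,1:]"]) simp

lemma polyfun_poly [intro]: "polyfun (\<lambda>x. poly p x)"
  unfolding polyfun_def by blast

lemma polyfun_add [intro]: "polyfun f \<Longrightarrow> polyfun g \<Longrightarrow> polyfun (\<lambda>x. f x + g x)"
  unfolding polyfun_def by (metis poly_add)

lemma polyfun_diff [intro]: "polyfun f \<Longrightarrow> polyfun g \<Longrightarrow> polyfun (\<lambda>x. f x - g x)"
  unfolding polyfun_def by (metis poly_diff)

lemma polyfun_mult [intro]: "polyfun f \<Longrightarrow> polyfun g \<Longrightarrow> polyfun (\<lambda>x. f x * g x)"
  unfolding polyfun_def by (metis poly_mult)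

lemma polyfun_uminus [intro]: "polyfun f \<Longrightarrow> polyfun (\<lambda>x. - f x)"
  unfolding polyfun_def by (metis poly_minus)

lemma polyfun_power [intro]: "polyfun f \<Longrightarrow> polyfun (\<lambda>x. f x ^ n)"
  by (induction n) (auto)

lemma polyfun_sum [intro]: "(\<And>i. i \<in> A \<Longrightarrow> polyfun (f i)) \<Longrightarrow> polyfun (\<lambda>x. \<Sum>i\<in>A. f i x)"
proof (induction A rule: infinite_finite_induct)
  case (insert a A) then show ?case by (simp add: polyfun_add)
qed auto

lemma polyfun_prod [intro]: "(\<And>i. i \<in> A \<Longrightarrow> polyfun (f i)) \<Longrightarrow> polyfun (\<lambda>x. \<Prod>i\<in>A. f i x)"
proof (induction A rule: infinite_finite_induct)
  case (insert a A) then show ?case by (simp add: polyfun_mult)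
qed auto

lemma polyfun_evalZ [intro]: "polyfun (\<lambda>x. evalZ p x)"
  unfolding evalZ_def by blast

lemma polyfun_zero_ext:
  assumes "polyfun f" "\<And>x. 0 < x \<Longrightarrow> x < 1 \<Longrightarrow> f x = 0"
  shows "f y = 0"
proof -
  obtain p where p: "\<And>x. f x = poly p x" using assms(1) unfolding polyfun_def by blast
  have "p = 0"
  proof (rule ccontr)
    assume "p \<noteq> 0"
    hence "finite {x. poly p x = 0}" by (rule poly_roots_finite)
    moreover have "{0<..<1::real} \<subseteq> {x. poly p x = 0}" using assms(2) p by auto
    ultimately have "finite {0<..<1::real}" by (rule finite_subset[rotated])
    thus False using infinite_Ioo_iff[of "0::real" 1] by simp
  qed
  thus ?thesis using p by simp
qed

lemma polyfun_eq_ext: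
  assumes "polyfun f" "polyfun g" "\<And>x. 0 < x \<Longrightarrow> x < 1 \<Longrightarrow> f x = g x"
  shows "f y = g y"
  using polyfun_zero_ext[of "\<lambda>x. f x - g x" y] assms by auto

lemma poly_zero_geom:
  fixes p :: "real poly"
  assumes c: "0 < c" "c < 1" and z: "\<And>n. n \<ge> 1 \<Longrightarrow> poly p (c ^ n) = 0"
  shows "p = 0"
proof (rule ccontr)
  assume "p \<noteq> 0"
  hence fin: "finite {x. poly p x = 0}" by (rule poly_roots_finite)
  have "(\<lambda>n. c ^ n) ` {1..} \<subseteq> {x. poly p x = 0}" using z by auto
  hence "finite ((\<lambda>n. c ^ n) ` {1::nat..})" using fin finite_subset by blast
  moreover have "inj_on (\<lambda>n. c ^ n) {1::nat..}"
  proof (rule inj_onI)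
    fix x y :: nat assume "c ^ x = c ^ y"
    thus "x = y" using c power_strict_decreasing[of x y c] power_strict_decreasing[of y x c]
      by (metis less_irrefl nat_neq_iff)
  qed
  ultimately have "finite {1::nat..}" using finite_imageD by blast
  thus False using infinite_Ici by blast
qed

lemma lin_indep:
  fixes U V :: "real poly" and \<beta> :: "nat \<Rightarrow> real"
  assumes U: "poly U 0 \<noteq> 0" and V: "poly V 0 \<noteq> 0"
    and z: "(\<Sum>k\<le>m. smult (\<beta> k) (monom 1 (m - k) * U * V ^ k)) = 0"
  shows "\<forall>k\<le>m. \<beta> k = 0"
proof (rule ccontr)
  assume neg: "\<not> (\<forall>k\<le>m. \<beta> k = 0)"
  define K where "K = {k. k \<le> m \<and> \<beta> k \<noteq> 0}"
  have Kne: "K \<noteq> {}" and Kfin: "finite K" using neg unfolding K_def by auto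
  define k0 where "k0 = Max K"
  have k0K: "k0 \<in> K" unfolding k0_def using Kne Kfin by simp
  have k0max: "\<And>k. k \<in> K \<Longrightarrow> k \<le> k0" unfolding k0_def using Kfin by simp
  define W where "W = (\<Sum>k\<le>m. smult (\<beta> k) (monom 1 (m - k) * V ^ k))"
  have "(\<Sum>k\<le>m. smult (\<beta> k) (monom 1 (m - k) * U * V ^ k)) = U * W"
    unfolding W_def by (simp add: sum_distrib_left mult_ac)
  with z have UW: "U * W = 0" by simp
  have cV: "coeff (V ^ k) 0 = (poly V 0) ^ k" for k
    by (simp add: poly_0_coeff_0 coeff_0_power)
  have "coeff W (m - k0) = (\<Sum>k\<le>m. \<beta> k * coeff (monom 1 (m - k) * V ^ k) (m - k0))"
    unfolding W_def by (simp add: coeff_sum)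
  also have "\<dots> = (\<Sum>k\<le>m. if k = k0 then \<beta> k0 * (poly V 0) ^ k0 else 0)"
  proof (rule sum.cong[OF refl])
    fix k assume k: "k \<in> {..m}"
    show "\<beta> k * coeff (monom 1 (m - k) * V ^ k) (m - k0) = (if k = k0 then \<beta> k0 * (poly V 0) ^ k0 else 0)"
    proof (cases "k = k0")
      case True thus ?thesis by (simp add: coeff_monom_mult cV)
    next
      case False
      show ?thesis
      proof (cases "k < k0")
        case True
        hence "m - k0 < m - k" using k0K k unfolding K_def by auto
        thus ?thesis using False by (simp add: coeff_monom_mult)
      next
        case False': False
        hence "k \<notin> K" using k0max \<open>k \<noteq> k0\<close> by (metis le_antisym not_le)
        thus ?thesis using k \<open>k \<noteq> k0\<close> unfolding K_def by auto
      qed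
    qed
  qed
  also have "\<dots> = \<beta> k0 * (poly V 0) ^ k0" using k0K unfolding K_def by simp
  finally have "coeff W (m - k0) \<noteq> 0" using k0K V unfolding K_def by simp
  hence "W \<noteq> 0" by auto
  moreover have "U \<noteq> 0" using U by auto
  ultimately show False using UW by simp
qed


lemma reflect_from_identity:
  fixes P :: "real poly"
  assumes P0: "poly P 0 \<noteq> 0"
    and id: "\<And>q. 0 < q \<Longrightarrow> q < 1 \<Longrightarrow> q ^ A * poly P q = q ^ B * poly P (1 / q)"
  shows "reflect_poly P = P"
proof -
  define D where "D = degree P"
  have "monom 1 (A + D) * P = monom 1 B * reflect_poly P"
  proof (rule poly_ext)
    fix y
    show "poly (monom 1 (A + D) * P) y = poly (monom 1 B * reflect_poly P) y"
    proof (rule polyfun_eq_ext[of "\<lambda>y. poly (monom 1 (A + D) * P) y" "\<lambda>y. poly (monom 1 B * reflect_poly P) y"])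
      fix x :: real assume x: "0 < x" "x < 1"
      have "poly (monom 1 B * reflect_poly P) x = x ^ B * (x ^ D * poly P (1 / x))"
        using x by (simp add: poly_monom poly_reflect_poly_nz D_def inverse_eq_divide)
      also have "\<dots> = x ^ D * (x ^ A * poly P x)" using id[OF x] by simp
      also have "\<dots> = poly (monom 1 (A + D) * P) x" by (simp add: poly_monom power_add)
      finally show "poly (monom 1 (A + D) * P) x = poly (monom 1 B * reflect_poly P) x" by simp
    qed auto
  qed
  hence eq: "\<And>i. coeff (monom 1 (A + D) * P) i = coeff (monom 1 B * reflect_poly P) i" by simp
  have Pn0: "P \<noteq> 0" using P0 by auto
  have l: "lead_coeff P \<noteq> 0" using Pn0 by simp
  have c0: "coeff P 0 \<noteq> 0" using P0 by (simp add: poly_0_coeff_0)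
  have "B \<le> A + D"
  proof (rule ccontr)
    assume "\<not> B \<le> A + D"
    thus False using eq[of "A + D"] c0 by (simp add: coeff_monom_mult)
  qed
  moreover have "A + D \<le> B"
  proof (rule ccontr)
    assume "\<not> A + D \<le> B"
    thus False using eq[of B] l by (simp add: coeff_monom_mult)
  qed
  ultimately have AB: "B = A + D" by simp
  show ?thesis
  proof (rule poly_eqI)
    fix i show "coeff (reflect_poly P) i = coeff P i"
      using eq[of "A + D + i"] AB by (simp add: coeff_monom_mult)
  qed
qed

lemma symmetric_from_reflect:
  fixes P :: "int poly"
  assumes "reflect_poly (map_poly real_of_int P) = map_poly real_of_int P"
  shows "symmetric_coeffs P"
  unfolding symmetric_coeffs_def
proof (intro allI impI)
  fix i assume i: "i \<le> degree P"
  have "coeff (reflect_poly (map_poly real_of_int P)) i = coeff (map_poly real_of_int P) i"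
    using assms by simp
  moreover have "degree (map_poly real_of_int P) = degree P" by (simp add: degree_map_poly)
  ultimately have "real_of_int (coeff P (degree P - i)) = real_of_int (coeff P i)"
    using i by (simp add: coeff_reflect_poly coeff_map_poly)
  thus "coeff P i = coeff P (degree P - i)" by simp
qed

lemma choose_neg_gchoose:
  "real ((k + a) choose k) = (-1) ^ k * ((- (real a + 1)) gchoose k)"
proof -
  have "((- (real a + 1)) gchoose k) = (-1) ^ k * ((real k - (- (real a + 1)) - 1) gchoose k)"
    by (rule gbinomial_negated_upper)
  also have "real k - (- (real a + 1)) - 1 = real (k + a)" by simp
  finally have "((- (real a + 1)) gchoose k) = (-1) ^ k * real ((k + a) choose k)"
    by (simp add: binomial_gbinomial)
  thus ?thesis by (simp add: power_mult_distrib[symmetric])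
qed

lemma choose_conv:
  "(\<Sum>k\<le>n. real ((k + a) choose k) * real ((n - k + b) choose (n - k))) = real ((n + a + b + 1) choose n)"
proof -
  have "(\<Sum>k\<le>n. real ((k + a) choose k) * real ((n - k + b) choose (n - k)))
      = (\<Sum>k=0..n. (-1) ^ n * (((- (real a + 1)) gchoose k) * ((- (real b + 1)) gchoose (n - k))))"
  proof (rule sum.cong)
    fix k assume "k \<in> {0..n}"
    hence kn: "k \<le> n" by simp
    have "real ((k + a) choose k) * real ((n - k + b) choose (n - k))
        = ((-1) ^ k * (-1) ^ (n - k)) * (((- (real a + 1)) gchoose k) * ((- (real b + 1)) gchoose (n - k)))"
      unfolding choose_neg_gchoose by simp
    also have "(-1::real) ^ k * (-1) ^ (n - k) = (-1) ^ n" using kn by (simp add: power_add[symmetric])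
    finally show "real ((k + a) choose k) * real ((n - k + b) choose (n - k))
        = (-1) ^ n * (((- (real a + 1)) gchoose k) * ((- (real b + 1)) gchoose (n - k)))" .
  qed (auto simp: atLeast0AtMost)
  also have "\<dots> = (-1) ^ n * ((- (real a + 1) + - (real b + 1)) gchoose n)"
    by (simp add: sum_distrib_left[symmetric] gbinomial_Vandermonde)
  also have "- (real a + 1) + - (real b + 1) = - (real (a + b + 1) + 1)" by simp
  also have "(-1) ^ n * ((- (real (a + b + 1) + 1)) gchoose n) = real ((n + (a + b + 1)) choose n)"
    using choose_neg_gchoose[of n "a + b + 1"] by (simp add: power_mult_distrib[symmetric])
  finally show ?thesis by (simp add: add_ac)
qed


definition ball :: "nat \<Rightarrow> nat \<Rightarrow> real" where
  "ball m j = real ((m + j) choose j) - 2 * (if j = 0 then 0 else real ((m + j - 1) choose (j - 1)))"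

definition bdiff :: "nat \<Rightarrow> nat \<Rightarrow> real" where
  "bdiff N i = real (N choose i) - (if i = 0 then 0 else real (N choose (i - 1)))"

lemma ball_pos:
  assumes "j < m" shows "ball m j > 0"
proof (cases "j = 0")
  case True thus ?thesis by (simp add: ball_def)
next
  case False
  then obtain i where j: "j = Suc i" by (cases j) auto
  define B where "B = (m + i) choose i"
  have e: "Suc (m + i) * B = ((Suc (m + i)) choose (Suc i)) * Suc i"
    unfolding B_def by (rule Suc_times_binomial_eq)
  have Bpos: "B > 0" unfolding B_def by simp
  have "real ((Suc (m + i)) choose (Suc i)) * real (Suc i) = real (Suc (m + i)) * real B"
    using e by (metis of_nat_mult)
  hence "real ((Suc (m + i)) choose (Suc i)) = real (Suc (m + i)) * real B / real (Suc i)"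
    by (simp add: field_simps)
  moreover have "real (Suc (m + i)) * real B / real (Suc i) > 2 * real B"
  proof -
    have "real (Suc (m + i)) > 2 * real (Suc i)" using assms j by simp
    hence "real (Suc (m + i)) * real B > 2 * real (Suc i) * real B" using Bpos by simp
    thus ?thesis by (simp add: field_simps)
  qed
  ultimately show ?thesis unfolding ball_def j B_def by simp
qed

lemma ballot_sum:
  assumes "i \<le> N"
  shows "(\<Sum>j\<le>i. ball m j * real ((N - j) choose (i - j))) = bdiff (m + N) i"
proof -
  have s1: "(\<Sum>j\<le>i. real ((m + j) choose j) * real ((N - j) choose (i - j))) = real ((m + N + 1) choose i)"
  proof -
    have "(\<Sum>j\<le>i. real ((m + j) choose j) * real ((N - j) choose (i - j)))
        = (\<Sum>j\<le>i. real ((j + m) choose j) * real ((i - j + (N - i)) choose (i - j)))"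
      by (rule sum.cong) (use assms in \<open>auto simp: add_ac\<close>)
    also have "\<dots> = real ((i + m + (N - i) + 1) choose i)" by (rule choose_conv)
    also have "i + m + (N - i) + 1 = m + N + 1" using assms by simp
    finally show ?thesis .
  qed
  show ?thesis
  proof (cases i)
    case 0 thus ?thesis by (simp add: ball_def bdiff_def)
  next
    case (Suc i')
    have s2: "(\<Sum>j\<le>i. (if j = 0 then 0 else real ((m + j - 1) choose (j - 1))) * real ((N - j) choose (i - j)))
        = real ((m + N) choose i')"
    proof -
      have "(\<Sum>j\<le>i. (if j = 0 then 0 else real ((m + j - 1) choose (j - 1))) * real ((N - j) choose (i - j)))
          = (\<Sum>j\<le>i'. real ((m + j) choose j) * real ((N - Suc j) choose (i' - j)))"
        unfolding Suc by (subst sum.atMost_Suc_shift) simp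
      also have "\<dots> = (\<Sum>j\<le>i'. real ((j + m) choose j) * real ((i' - j + (N - i)) choose (i' - j)))"
        by (rule sum.cong) (use assms Suc in \<open>auto simp: add_ac\<close>)
      also have "\<dots> = real ((i' + m + (N - i) + 1) choose i')" by (rule choose_conv)
      also have "i' + m + (N - i) + 1 = m + N" using assms Suc by simp
      finally show ?thesis .
    qed
    have "(\<Sum>j\<le>i. ball m j * real ((N - j) choose (i - j)))
        = (\<Sum>j\<le>i. real ((m + j) choose j) * real ((N - j) choose (i - j)))
          - 2 * (\<Sum>j\<le>i. (if j = 0 then 0 else real ((m + j - 1) choose (j - 1))) * real ((N - j) choose (i - j)))"
      unfolding ball_def sum_distrib_left sum_subtractf[symmetric] by (rule sum.cong) (auto simp: algebra_simps)
    also have "\<dots> = real ((m + N + 1) choose i) - 2 * real ((m + N) choose i')" using s1 s2 by simp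
    also have "real ((m + N + 1) choose i) = real ((m + N) choose i) + real ((m + N) choose i')"
      using Suc by simp
    finally show ?thesis unfolding bdiff_def using Suc by simp
  qed
qed

lemma ballot_unique:
  fixes a :: "nat \<Rightarrow> real"
  assumes mN: "m \<le> N"
    and h: "\<And>i. i \<le> m \<Longrightarrow> (\<Sum>j\<le>i. a j * real ((N - j) choose (i - j))) = bdiff (m + N) i"
  shows "j \<le> m \<Longrightarrow> a j = ball m j"
proof (induction j rule: less_induct)
  case (less i)
  have IH: "\<And>j. j < i \<Longrightarrow> a j = ball m j" using less by simp
  have "(\<Sum>j\<le>i. a j * real ((N - j) choose (i - j))) = (\<Sum>j\<le>i. ball m j * real ((N - j) choose (i - j)))"
    using h[OF less.prems] ballot_sum[of i N m] less.prems mN by simp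
  moreover have "(\<Sum>j\<le>i. a j * real ((N - j) choose (i - j))) = (\<Sum>j<i. ball m j * real ((N - j) choose (i - j))) + a i"
    by (simp add: lessThan_Suc_atMost[symmetric] IH)
  moreover have "(\<Sum>j\<le>i. ball m j * real ((N - j) choose (i - j))) = (\<Sum>j<i. ball m j * real ((N - j) choose (i - j))) + ball m i"
    by (simp add: lessThan_Suc_atMost[symmetric])
  ultimately show ?case by simp
qed

lemma coeff_one_minus_power:
  "coeff ([:1, -1:] ^ n :: real poly) l = (-1) ^ l * real (n choose l)"
proof (induction n arbitrary: l)
  case 0 thus ?case by (cases l) auto
next
  case (Suc n)
  have e: "[:1, -1:] ^ Suc n = [:1, -1:] ^ n - pCons 0 ([:1, -1:] ^ n :: real poly)"
    by (simp add: algebra_simps)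
  show ?case
  proof (cases l)
    case 0 thus ?thesis unfolding e by (simp add: Suc.IH)
  next
    case (Suc l')
    show ?thesis unfolding e Suc by (simp add: Suc.IH algebra_simps)
  qed
qed


definition pM :: "nat \<Rightarrow> real poly" where
  "pM M = [:1, 1:] * [:1, -1:] ^ M"

definition cc :: "nat \<Rightarrow> nat \<Rightarrow> real" where
  "cc M j = coeff (pM M) j"

definition rr :: "nat \<Rightarrow> real \<Rightarrow> nat \<Rightarrow> real" where
  "rr M s j = s ^ (2 * j) / s ^ (M + 1)"

definition phi :: "nat \<Rightarrow> real \<Rightarrow> nat \<Rightarrow> real" where
  "phi M s j = rr M s j / (1 - rr M s j)"

definition Dd :: "nat \<Rightarrow> real \<Rightarrow> real" where
  "Dd M s = (1 - s ^ 2) ^ (M - 1) * (1 - s ^ 4)"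

definition Fx :: "nat \<Rightarrow> real \<Rightarrow> real \<Rightarrow> real" where
  "Fx M s X = (\<Sum>j\<le>M + 1. cc M j * phi M s j * (X ^ (M + 1) - X ^ (2 * j))) / Dd M s"

lemma poly_pM: "M \<ge> 1 \<Longrightarrow> poly (pM M) y = (1 - y ^ 2) * (1 - y) ^ (M - 1)"
  by (cases M) (auto simp: pM_def power2_eq_square algebra_simps)

lemma cc_eq: "cc M i = (-1) ^ i * bdiff M i"
proof (cases i)
  case 0 thus ?thesis by (simp add: cc_def pM_def bdiff_def coeff_one_minus_power)
next
  case (Suc i')
  have "pM M = [:1, -1:] ^ M + pCons 0 ([:1, -1:] ^ M)" unfolding pM_def by (simp add: algebra_simps)
  hence "cc M i = (-1) ^ i * real (M choose i) + (-1) ^ i' * real (M choose i')"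
    unfolding cc_def Suc by (simp add: coeff_one_minus_power)
  thus ?thesis unfolding bdiff_def Suc by (simp add: algebra_simps)
qed

lemma degree_pM: "degree (pM M) \<le> M + 1"
proof -
  have "degree (pM M) \<le> degree [:1, 1::real:] + degree ([:1, -1::real:] ^ M)"
    unfolding pM_def by (rule degree_mult_le)
  also have "degree ([:1, -1::real:] ^ M) \<le> M"
    using degree_power_le[of "[:1, -1::real:]" M] by simp
  finally show ?thesis by simp
qed

lemma poly_pM_sum: "poly (pM M) y = (\<Sum>j\<le>M + 1. cc M j * y ^ j)"
proof -
  have "poly (pM M) y = (\<Sum>i\<le>degree (pM M). coeff (pM M) i * y ^ i)" by (rule poly_altdef)
  also have "\<dots> = (\<Sum>i\<le>M + 1. coeff (pM M) i * y ^ i)"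
    by (rule sum.mono_neutral_left) (use degree_pM in \<open>auto simp: coeff_eq_0\<close>)
  finally show ?thesis unfolding cc_def .
qed

lemma bdiff_refl:
  assumes "j \<le> M + 1" shows "bdiff M (M + 1 - j) = - bdiff M j"
proof (cases j)
  case 0 thus ?thesis by (simp add: bdiff_def)
next
  case (Suc j')
  show ?thesis
  proof (cases "j = M + 1")
    case True thus ?thesis by (simp add: bdiff_def)
  next
    case False
    hence jM: "j' < M" using assms Suc by simp
    have a: "M + 1 - j = M - j'" using Suc by simp
    have b: "M - j' \<noteq> 0" using jM by simp
    have c: "M - j' - 1 = M - Suc j'" by simp
    have e1: "M choose (M - j') = M choose j'" using jM by (simp add: binomial_symmetric[symmetric])
    have e2: "M choose (M - Suc j') = M choose Suc j'" using jM by (simp add: binomial_symmetric[symmetric])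
    show ?thesis unfolding bdiff_def a c using b e1 e2 Suc by simp
  qed
qed

lemma cc_refl:
  assumes "j \<le> M + 1" shows "cc M (M + 1 - j) = (-1) ^ M * cc M j"
proof -
  have "(-1::real) ^ (M + 1 - j) = (-1) ^ M * (-1) ^ j * (-1)"
  proof -
    have "(-1::real) ^ (M + 1 - j) * (-1) ^ j = (-1) ^ (M + 1)" using assms by (simp add: power_add[symmetric])
    moreover have "(-1::real) ^ j * (-1) ^ j = 1" by (induct j) auto
    ultimately have "(-1::real) ^ (M + 1 - j) = (-1) ^ (M + 1) * (-1) ^ j"
      by (metis mult.assoc mult.right_neutral)
    thus ?thesis by simp
  qed
  thus ?thesis unfolding cc_eq using bdiff_refl[OF assms] by simp
qed

lemma cc_sum: "M \<ge> 1 \<Longrightarrow> (\<Sum>j\<le>M + 1. cc M j) = 0"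
  using poly_pM_sum[of M 1] by (cases M) (auto simp: pM_def)

lemma cc_sum_j: assumes "M \<ge> 2" shows "(\<Sum>j\<le>M + 1. real j * cc M j) = 0"
proof -
  have dg: "degree (pderiv (pM M)) \<le> M" using degree_pM[of M] by (simp add: degree_pderiv)
  have "poly (pderiv (pM M)) 1 = (\<Sum>i\<le>degree (pderiv (pM M)). coeff (pderiv (pM M)) i)" by (simp add: poly_altdef)
  also have "\<dots> = (\<Sum>i\<le>M. coeff (pderiv (pM M)) i)"
    by (rule sum.mono_neutral_left) (use dg in \<open>auto simp: coeff_eq_0\<close>)
  also have "\<dots> = (\<Sum>i\<le>M. real (Suc i) * cc M (Suc i))" by (simp add: coeff_pderiv cc_def)
  also have "\<dots> = (\<Sum>j\<le>Suc M. real j * cc M j)"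
    by (subst sum.atMost_Suc_shift) simp
  also have "\<dots> = (\<Sum>j\<le>M + 1. real j * cc M j)" by simp
  finally have e: "(\<Sum>j\<le>M + 1. real j * cc M j) = poly (pderiv (pM M)) 1" by simp
  obtain M' where M': "M = Suc (Suc M')" using assms by (metis add_2_eq_Suc le_Suc_ex)
  have e2: "pM M = ([:1,-1:] * [:1,-1:]) * ([:1,1:] * [:1,-1:] ^ M')"
    unfolding pM_def M' power_Suc by (simp only: mult_ac)
  have "poly (pderiv (pM M)) 1 = 0"
    unfolding e2 pderiv_mult poly_add poly_mult by simp
  thus ?thesis using e by simp
qed

lemma rr_eq_1:
  assumes s: "0 < s" "s < 1" and "rr M s j = 1" shows "2 * j = M + 1"
proof -
  have "s ^ (2 * j) = s ^ (M + 1)" using assms unfolding rr_def by (simp add: field_simps)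
  thus ?thesis using s power_strict_decreasing[of "2*j" "M+1" s] power_strict_decreasing[of "M+1" "2*j" s]
    by (metis less_irrefl nat_neq_iff)
qed

lemma cc_mid: "odd M \<Longrightarrow> 2 * j = M + 1 \<Longrightarrow> cc M j = 0"
proof -
  assume o: "odd M" and j: "2 * j = M + 1"
  have "M + 1 - j = j" using j by simp
  hence "cc M j = - cc M j" using cc_refl[of j M] o j by simp
  thus ?thesis by simp
qed


lemma pow_swap: "(x ^ a) ^ b = (x ^ b) ^ a" for x :: real
  by (simp only: power_mult[symmetric] mult.commute)

lemma div_div_cancel: "c \<noteq> 0 \<Longrightarrow> (x / c) / (z / c) = x / (z::real)"
  by (cases "z = 0") (simp_all add: field_simps)

lemma powr_half_nat:
  assumes s: "0 < s" and kn: "k \<le> n"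
  shows "(s ^ 2) powr ((real M + 1) / 2 * (real n - real k)) = s ^ ((M + 1) * (n - k))"
proof -
  have "(s ^ 2) powr ((real M + 1) / 2 * (real n - real k)) = (s powr 2) powr ((real M + 1) / 2 * (real n - real k))"
    using s by (simp add: powr_numeral)
  also have "\<dots> = s powr (2 * ((real M + 1) / 2 * (real n - real k)))" by (simp add: powr_powr)
  also have "2 * ((real M + 1) / 2 * (real n - real k)) = real ((M + 1) * (n - k))"
  proof -
    have h1: "real (n - k) = real n - real k" using kn by (simp add: of_nat_diff)
    have h: "real ((M + 1) * (n - k)) = (real M + 1) * (real n - real k)" unfolding of_nat_mult h1 by simp
    show ?thesis unfolding h by (simp add: field_simps)
  qed
  also have "s powr real ((M + 1) * (n - k)) = s ^ ((M + 1) * (n - k))" by (rule powr_realpow[OF s])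
  finally show ?thesis .
qed

lemma S_term:
  assumes M: "M \<ge> 1" and s: "0 < s" "s < 1" and kn: "k \<le> n"
  shows "qint (s^2) (2*k) / qint (s^2) 2 * qint (s^2) k ^ (M - 1) * (s^2) powr ((real M + 1) / 2 * (real n - real k))
       = poly (pM M) ((s^2) ^ k) / Dd M s * s ^ ((M + 1) * (n - k))"
proof -
  have "s^2 < 1" using s by (subst power_less_one_iff) auto
  hence q1: "1 - s^2 \<noteq> 0" by simp
  have "s^4 < 1" using s by (subst power_less_one_iff) auto
  hence q2: "1 - s^4 \<noteq> 0" by simp
  define y where "y = (s^2)^k"
  have y2: "(s^2)^(2*k) = y^2" unfolding y_def by (simp only: power_mult pow_swap[of "s^2" 2 k])
  have s4: "(s^2)^2 = s^4" by (simp only: power_mult[symmetric]) simp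
  have a: "qint (s^2) (2*k) / qint (s^2) 2 = (1 - y^2) / (1 - s^4)"
    unfolding qint_def y2 s4 by (rule div_div_cancel[OF q1])
  have b: "qint (s^2) k ^ (M - 1) = (1 - y) ^ (M - 1) / (1 - s^2) ^ (M - 1)"
    unfolding qint_def y_def by (simp add: power_divide)
  have "qint (s^2) (2*k) / qint (s^2) 2 * qint (s^2) k ^ (M - 1) = poly (pM M) y / Dd M s"
    unfolding a b poly_pM[OF M] Dd_def by simp
  hence "qint (s^2) (2*k) / qint (s^2) 2 * qint (s^2) k ^ (M - 1) = poly (pM M) ((s^2) ^ k) / Dd M s"
    unfolding y_def .
  thus ?thesis using powr_half_nat[OF s(1) kn] by simp
qed

lemma geom_piece:
  assumes s: "0 < s" "s < 1"
  shows "cc M j * ((s ^ n) ^ (M + 1) * (\<Sum>k=1..n. rr M s j ^ k))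
       = cc M j * phi M s j * ((s ^ n) ^ (M + 1) - (s ^ n) ^ (2 * j))"
proof (cases "rr M s j = 1")
  case True
  hence j: "2 * j = M + 1" using rr_eq_1[OF s] by blast
  hence "odd M" by presburger
  hence "cc M j = 0" using cc_mid j by blast
  thus ?thesis by simp
next
  case False
  note rne = False
  define r where "r = rr M s j"
  have r1: "1 - r \<noteq> 0" using False unfolding r_def by simp
  have a1: "(s^(M+1))^n = (s^n)^(M+1)" by (rule pow_swap)
  have a2: "(s^(2*j))^n = (s^n)^(2*j)" by (rule pow_swap)
  have rn: "(s ^ n) ^ (M + 1) * r ^ n = (s ^ n) ^ (2 * j)"
    unfolding r_def rr_def power_divide a1 a2 using s by simp
  have "(\<Sum>k=1..n. r ^ k) = (r - r ^ Suc n) / (1 - r)"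
  proof (cases "n = 0")
    case True thus ?thesis by simp
  next
    case False thus ?thesis using sum_gp[of r 1 n] r1 rne unfolding r_def by auto
  qed
  note G = this
  have "(s ^ n) ^ (M + 1) * (\<Sum>k=1..n. r ^ k) = r / (1 - r) * ((s ^ n) ^ (M + 1) - (s ^ n) ^ (M + 1) * r ^ n)"
    unfolding G using r1 by (simp add: field_simps)
  also have "\<dots> = r / (1 - r) * ((s ^ n) ^ (M + 1) - (s ^ n) ^ (2 * j))" using rn by simp
  finally show ?thesis unfolding phi_def r_def by simp
qed

lemma S_explicit:
  assumes M: "M \<ge> 1" and s: "0 < s" "s < 1"
  shows "S M n (s ^ 2) = Fx M s (s ^ n)"
proof -
  have "S M n (s ^ 2) = (\<Sum>k=1..n. poly (pM M) ((s^2) ^ k) / Dd M s * s ^ ((M + 1) * (n - k)))"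
    unfolding S_def by (rule sum.cong) (use S_term[OF M s] in auto)
  also have "\<dots> = (\<Sum>k=1..n. \<Sum>j\<le>M + 1. cc M j * ((s ^ n) ^ (M + 1) * rr M s j ^ k) / Dd M s)"
  proof (rule sum.cong[OF refl])
    fix k assume k: "k \<in> {1..n}"
    have e: "((s^2)^k)^j * s ^ ((M + 1) * (n - k)) = (s ^ n) ^ (M + 1) * rr M s j ^ k" for j
    proof -
      have ex: "(M+1)*n = (M+1)*(n-k) + (M+1)*k" using k
        by (metis add_mult_distrib2 le_add_diff_inverse2 atLeastAtMost_iff)
      have "(s ^ n) ^ (M + 1) = s ^ ((M+1)*n)" by (simp only: power_mult pow_swap)
      also have "\<dots> = s ^ ((M + 1) * (n - k)) * s ^ ((M + 1) * k)" unfolding ex by (rule power_add)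
      finally have "(s ^ n) ^ (M + 1) = s ^ ((M + 1) * (n - k)) * s ^ ((M + 1) * k)" .
      moreover have "((s^2)^k)^j = s^(2*j*k)" by (simp only: power_mult[symmetric] mult_ac)
      moreover have "(s^(2*j))^k = s^(2*j*k)" by (simp only: power_mult)
      moreover have "(s^(M+1))^k = s^((M+1)*k)" by (simp only: power_mult)
      moreover have "s^((M+1)*k) \<noteq> 0" using s by simp
      ultimately show ?thesis unfolding rr_def power_divide by (simp add: field_simps)
    qed
    show "poly (pM M) ((s^2) ^ k) / Dd M s * s ^ ((M + 1) * (n - k))
        = (\<Sum>j\<le>M + 1. cc M j * ((s ^ n) ^ (M + 1) * rr M s j ^ k) / Dd M s)"
    proof -
      have "poly (pM M) ((s^2) ^ k) / Dd M s * s ^ ((M + 1) * (n - k))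
          = (\<Sum>j\<le>M + 1. cc M j * (((s^2)^k)^j * s ^ ((M + 1) * (n - k))) / Dd M s)"
        unfolding poly_pM_sum sum_divide_distrib sum_distrib_right
        by (rule sum.cong[OF refl]) (simp add: mult_ac)
      also have "\<dots> = (\<Sum>j\<le>M + 1. cc M j * ((s ^ n) ^ (M + 1) * rr M s j ^ k) / Dd M s)"
        unfolding e by simp
      finally show ?thesis .
    qed
  qed
  also have "\<dots> = (\<Sum>j\<le>M + 1. cc M j * ((s ^ n) ^ (M + 1) * (\<Sum>k=1..n. rr M s j ^ k))) / Dd M s"
  proof -
    have "(\<Sum>k=1..n. \<Sum>j\<le>M + 1. cc M j * ((s ^ n) ^ (M + 1) * rr M s j ^ k) / Dd M s)
        = (\<Sum>j\<le>M + 1. \<Sum>k=1..n. cc M j * ((s ^ n) ^ (M + 1) * rr M s j ^ k) / Dd M s)"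
      by (rule sum.swap)
    also have "\<dots> = (\<Sum>j\<le>M + 1. cc M j * ((s ^ n) ^ (M + 1) * (\<Sum>k=1..n. rr M s j ^ k)) / Dd M s)"
      by (rule sum.cong[OF refl]) (simp only: sum_distrib_left sum_divide_distrib)
    also have "\<dots> = (\<Sum>j\<le>M + 1. cc M j * ((s ^ n) ^ (M + 1) * (\<Sum>k=1..n. rr M s j ^ k))) / Dd M s"
      by (simp only: sum_divide_distrib)
    finally show ?thesis .
  qed
  also have "\<dots> = Fx M s (s ^ n)"
    unfolding Fx_def by (simp only: geom_piece[OF s])
  finally show ?thesis .
qed


lemma sum_rev_atMost: "(\<Sum>j\<le>N. f j) = (\<Sum>j\<le>N. f (N - j))" for f :: "nat \<Rightarrow> real"
  using sum.atLeastAtMost_rev[of f 0 N] by (simp add: atMost_atLeast0)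

lemma rr_pos: "0 < s \<Longrightarrow> rr M s j > 0"
  unfolding rr_def by simp

lemma rr_refl:
  assumes s: "0 < s" and j: "j \<le> M + 1"
  shows "rr M s (M + 1 - j) = 1 / rr M s j"
proof -
  have "2 * (M + 1 - j) + 2 * j = 2 * (M + 1)" using j by simp
  hence e: "s ^ (2 * (M + 1 - j)) * s ^ (2 * j) = s ^ (M + 1) * s ^ (M + 1)"
    by (metis power_add mult_2)
  show ?thesis unfolding rr_def using s e by (simp add: field_simps)
qed

lemma phi_refl:
  assumes s: "0 < s" "s < 1" and j: "j \<le> M + 1" and nm: "2 * j \<noteq> M + 1"
  shows "phi M s (M + 1 - j) = -1 - phi M s j"
proof -
  define r where "r = rr M s j"
  have r0: "r > 0" unfolding r_def using rr_pos s by blast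
  have r1: "r \<noteq> 1" unfolding r_def using rr_eq_1[OF s] nm by blast
  have "phi M s (M + 1 - j) = (1 / r) / (1 - 1 / r)" unfolding phi_def rr_refl[OF s(1) j] r_def ..
  also have "\<dots> = 1 / (r - 1)" using r0 r1 by (simp add: field_simps)
  also have "\<dots> = -1 - r / (1 - r)" using r1 by (simp add: field_simps)
  finally show ?thesis unfolding phi_def r_def .
qed

lemma pairQ:
  assumes M: "even M" "M \<ge> 1" and s: "0 < s" "s < 1"
  shows "(\<Sum>j\<le>M + 1. cc M j * phi M s j) = 0"
proof -
  define T where "T = (\<Sum>j\<le>M + 1. cc M j * phi M s j)"
  have "T = (\<Sum>j\<le>M + 1. cc M (M + 1 - j) * phi M s (M + 1 - j))"
    unfolding T_def by (rule sum_rev_atMost)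
  also have "\<dots> = (\<Sum>j\<le>M + 1. - cc M j - cc M j * phi M s j)"
  proof (rule sum.cong[OF refl])
    fix j assume "j \<in> {..M + 1}"
    hence j: "j \<le> M + 1" by simp
    have nm: "2 * j \<noteq> M + 1" using M by presburger
    show "cc M (M + 1 - j) * phi M s (M + 1 - j) = - cc M j - cc M j * phi M s j"
      unfolding cc_refl[OF j] phi_refl[OF s j nm] using M by (simp add: algebra_simps)
  qed
  also have "\<dots> = - (\<Sum>j\<le>M + 1. cc M j) - T" unfolding T_def by (simp add: sum_subtractf sum_negf)
  also have "\<dots> = - T" using cc_sum M by simp
  finally show ?thesis unfolding T_def by simp
qed

lemma pairP:
  assumes M: "M = 2 * m + 1" "m \<ge> 1" and s: "0 < s" "s < 1"
  shows "(\<Sum>j\<le>M + 1. cc M j * (real (m + 1) - real j) * phi M s j) = 0"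
proof -
  define T where "T = (\<Sum>j\<le>M + 1. cc M j * (real (m + 1) - real j) * phi M s j)"
  have "T = (\<Sum>j\<le>M + 1. cc M (M + 1 - j) * (real (m + 1) - real (M + 1 - j)) * phi M s (M + 1 - j))"
    unfolding T_def by (rule sum_rev_atMost)
  also have "\<dots> = (\<Sum>j\<le>M + 1. - (cc M j * (real (m + 1) - real j)) - cc M j * (real (m + 1) - real j) * phi M s j)"
  proof (rule sum.cong[OF refl])
    fix j assume "j \<in> {..M + 1}"
    hence j: "j \<le> M + 1" by simp
    have w: "real (m + 1) - real (M + 1 - j) = - (real (m + 1) - real j)" using j M by (simp add: of_nat_diff)
    have c: "cc M (M + 1 - j) = - cc M j" using cc_refl[OF j] M by simp
    show "cc M (M + 1 - j) * (real (m + 1) - real (M + 1 - j)) * phi M s (M + 1 - j)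
        = - (cc M j * (real (m + 1) - real j)) - cc M j * (real (m + 1) - real j) * phi M s j"
    proof (cases "2 * j = M + 1")
      case True
      hence "real (m + 1) - real j = 0" using M by simp
      thus ?thesis unfolding w c by simp
    next
      case False
      show ?thesis unfolding w c phi_refl[OF s j False] by (simp add: algebra_simps)
    qed
  qed
  also have "\<dots> = - (\<Sum>j\<le>M + 1. cc M j * (real (m + 1) - real j)) - T"
    unfolding T_def by (simp add: sum_subtractf sum_negf)
  also have "(\<Sum>j\<le>M + 1. cc M j * (real (m + 1) - real j)) = 0"
  proof -
    have "(\<Sum>j\<le>M + 1. cc M j * (real (m + 1) - real j))
        = real (m + 1) * (\<Sum>j\<le>M + 1. cc M j) - (\<Sum>j\<le>M + 1. real j * cc M j)"
      by (simp add: sum_subtractf sum_distrib_left algebra_simps)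
    also have "\<dots> = 0" using cc_sum[of M] cc_sum_j[of M] M by simp
    finally show ?thesis .
  qed
  finally have "T = - T" by simp
  hence "T = 0" by simp
  thus ?thesis unfolding T_def .
qed

lemma ev_01: "eventually (\<lambda>s. 0 < s \<and> s < (1::real)) (at_right 0)"
  unfolding eventually_at_right_field by (rule exI[of _ 1]) auto

lemma phi_lim:
  "((\<lambda>s. phi M s j) \<longlongrightarrow> (if 2 * j < M + 1 then -1 else 0)) (at_right 0)"
proof (cases "2 * j < M + 1")
  case True
  define d where "d = M + 1 - 2 * j"
  have d0: "d > 0" using True unfolding d_def by simp
  have ev: "eventually (\<lambda>s. 1 / (s ^ d - 1) = phi M s j) (at_right 0)"
    using ev_01
  proof (rule eventually_mono)
    fix s :: real assume s: "0 < s \<and> s < 1"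
    have e: "s ^ (M + 1) = s ^ (2 * j) * s ^ d" unfolding d_def using True
      by (simp add: power_add[symmetric])
    show "1 / (s ^ d - 1) = phi M s j" unfolding phi_def rr_def e using s
      by (simp add: field_simps)
  qed
  have "((\<lambda>s. 1 / (s ^ d - 1)) \<longlongrightarrow> 1 / (0 ^ d - 1)) (at_right (0::real))"
    by (intro tendsto_intros) (use d0 in \<open>auto simp: zero_power\<close>)
  moreover have "(0::real) ^ d = 0" using d0 by simp
  ultimately have "((\<lambda>s. 1 / (s ^ d - 1)) \<longlongrightarrow> -1) (at_right (0::real))" by simp
  hence "((\<lambda>s. phi M s j) \<longlongrightarrow> -1) (at_right (0::real))" using tendsto_cong[OF ev] by blast
  thus ?thesis using True by simp
next
  case False
  show ?thesis
  proof (cases "2 * j = M + 1")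
    case True
    have ev: "eventually (\<lambda>s. 0 = phi M s j) (at_right 0)"
      using ev_01
    proof (rule eventually_mono)
      fix s :: real assume s: "0 < s \<and> s < 1"
      show "0 = phi M s j" unfolding phi_def rr_def True using s by simp
    qed
    have "((\<lambda>s. 0::real) \<longlongrightarrow> 0) (at_right (0::real))" by simp
    hence "((\<lambda>s. phi M s j) \<longlongrightarrow> 0) (at_right (0::real))" using tendsto_cong[OF ev] by blast
    thus ?thesis using False by simp
  next
    case False2: False
    define d where "d = 2 * j - (M + 1)"
    have d0: "d > 0" using False False2 unfolding d_def by simp
    have ev: "eventually (\<lambda>s. s ^ d / (1 - s ^ d) = phi M s j) (at_right 0)"
      using ev_01
    proof (rule eventually_mono)
      fix s :: real assume s: "0 < s \<and> s < 1"
      have ed: "2 * j = (M + 1) + d" unfolding d_def using False False2 by simp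
      have e: "s ^ (2 * j) = s ^ (M + 1) * s ^ d" by (subst ed) (rule power_add)
      show "s ^ d / (1 - s ^ d) = phi M s j" unfolding phi_def rr_def e using s
        by (simp add: field_simps)
    qed
    have "((\<lambda>s. s ^ d / (1 - s ^ d)) \<longlongrightarrow> 0 ^ d / (1 - 0 ^ d)) (at_right (0::real))"
      by (intro tendsto_intros) (use d0 in \<open>auto simp: zero_power\<close>)
    moreover have "(0::real) ^ d = 0" using d0 by simp
    ultimately have "((\<lambda>s. s ^ d / (1 - s ^ d)) \<longlongrightarrow> 0) (at_right (0::real))" by simp
    hence "((\<lambda>s. phi M s j) \<longlongrightarrow> 0) (at_right (0::real))" using tendsto_cong[OF ev] by blast
    thus ?thesis using False by simp
  qed
qed

lemma Dd_lim: "((\<lambda>s. Dd M s) \<longlongrightarrow> 1) (at_right 0)"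
proof -
  have "((\<lambda>s. Dd M s) \<longlongrightarrow> (1 - 0 ^ 2) ^ (M - 1) * (1 - 0 ^ 4)) (at_right (0::real))"
    unfolding Dd_def by (intro tendsto_intros)
  thus ?thesis by simp
qed


lemma pderiv_sum: "pderiv (\<Sum>i\<in>A. f i) = (\<Sum>i\<in>A. pderiv (f i))"
  by (induction A rule: infinite_finite_induct) (auto simp: pderiv_add)

lemma coeff_monom_mult_omp:
  "coeff (monom 1 j * [:1, -1:] ^ e :: real poly) i = (if j \<le> i then (-1) ^ (i - j) * real (e choose (i - j)) else 0)"
  by (simp add: coeff_monom_mult coeff_one_minus_power)

lemma zero_analysis:
  fixes a :: "nat \<Rightarrow> real"
  assumes mN: "m \<le> N"
    and h: "\<And>x::real. (\<Sum>j\<le>m. (-1) ^ j * a j * (x ^ j * (1 - x) ^ (N - j)))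
                = (\<Sum>i\<le>m. cc (m + N) i * x ^ i) + \<kappa> * x ^ (m + 1)"
  shows "\<And>j. j \<le> m \<Longrightarrow> a j = ball m j"
proof -
  define Gp where "Gp = (\<Sum>j\<le>m. smult ((-1) ^ j * a j) (monom 1 j * [:1, -1:] ^ (N - j)))"
  define Lp where "Lp = (\<Sum>i\<le>m. smult (cc (m + N) i) (monom 1 i)) + monom \<kappa> (m + 1)"
  have "Gp = Lp"
  proof (rule poly_ext)
    fix x
    have "poly Gp x = (\<Sum>j\<le>m. (-1) ^ j * a j * (x ^ j * (1 - x) ^ (N - j)))"
      unfolding Gp_def by (simp add: poly_sum poly_monom)
    also have "\<dots> = poly Lp x" unfolding h Lp_def by (simp add: poly_sum poly_monom)
    finally show "poly Gp x = poly Lp x" .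
  qed
  have key: "(\<Sum>j\<le>i. a j * real ((N - j) choose (i - j))) = bdiff (m + N) i" if i: "i \<le> m" for i
  proof -
    have "coeff Gp i = (\<Sum>j\<le>m. (-1) ^ j * a j * (if j \<le> i then (-1) ^ (i - j) * real ((N - j) choose (i - j)) else 0))"
      unfolding Gp_def by (simp add: coeff_sum coeff_monom_mult_omp)
    also have "\<dots> = (\<Sum>j\<le>i. (-1) ^ j * a j * ((-1) ^ (i - j) * real ((N - j) choose (i - j))))"
      by (rule sum.mono_neutral_cong_right) (use i in auto)
    also have "\<dots> = (\<Sum>j\<le>i. (-1) ^ i * (a j * real ((N - j) choose (i - j))))"
    proof (rule sum.cong[OF refl])
      fix j assume "j \<in> {..i}"
      hence "(-1::real) ^ j * (-1) ^ (i - j) = (-1) ^ i" by (simp add: power_add[symmetric])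
      thus "(-1) ^ j * a j * ((-1) ^ (i - j) * real ((N - j) choose (i - j))) = (-1) ^ i * (a j * real ((N - j) choose (i - j)))"
        by (metis (no_types, lifting) mult.assoc mult.left_commute)
    qed
    also have "\<dots> = (-1) ^ i * (\<Sum>j\<le>i. a j * real ((N - j) choose (i - j)))" by (simp add: sum_distrib_left)
    finally have g: "coeff Gp i = (-1) ^ i * (\<Sum>j\<le>i. a j * real ((N - j) choose (i - j)))" .
    have "coeff Lp i = (\<Sum>i'\<le>m. cc (m + N) i' * (if i' = i then 1 else 0))"
      unfolding Lp_def using i by (simp add: coeff_sum coeff_monom)
    also have "\<dots> = cc (m + N) i" using i by (simp add: if_distrib cong: if_cong)
    finally have l: "coeff Lp i = (-1) ^ i * bdiff (m + N) i" by (simp add: cc_eq)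
    from g l \<open>Gp = Lp\<close> show ?thesis by simp
  qed
  show "\<And>j. j \<le> m \<Longrightarrow> a j = ball m j" by (rule ballot_unique[OF mN key])
qed


definition RR :: "real \<Rightarrow> real poly" where
  "RR q = [:1, -1:] * [:1, -q:]"

lemma poly_RR: "poly (RR q) x = (1 - x) * (1 - q * x)"
  by (simp add: RR_def algebra_simps)

definition betaP :: "nat \<Rightarrow> (nat \<Rightarrow> int poly) \<Rightarrow> real \<Rightarrow> nat \<Rightarrow> real" where
  "betaP m P q k = (-1) ^ (m - k) * qfact q k / qfact q (m + 1) * evalZ (P (m - k)) q
                    / ((1 - q) ^ (2 * (k + 1)) * qint q 2)"

definition GPp :: "nat \<Rightarrow> (nat \<Rightarrow> int poly) \<Rightarrow> real \<Rightarrow> real poly" where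
  "GPp m P q = (\<Sum>k\<le>m. smult (betaP m P q k) (monom 1 (m - k) * RR q * RR q ^ k))"

definition FPp :: "nat \<Rightarrow> real \<Rightarrow> real poly" where
  "FPp m s = smult (1 / Dd (2 * m + 1) s)
     (\<Sum>j\<le>2 * m + 2. smult (cc (2 * m + 1) j * phi (2 * m + 1) s j) (monom 1 (m + 1) - monom 1 j))"

lemma poly_FPp: "poly (FPp m s) x
   = (\<Sum>j\<le>2 * m + 2. cc (2 * m + 1) j * phi (2 * m + 1) s j * (x ^ (m + 1) - x ^ j)) / Dd (2 * m + 1) s"
  unfolding FPp_def by (simp add: poly_sum poly_monom)

lemma poly_GPp: "poly (GPp m P q) x
   = (\<Sum>k\<le>m. betaP m P q k * (x ^ (m - k) * poly (RR q) x * poly (RR q) x ^ k))"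
  unfolding GPp_def by (simp add: poly_sum poly_monom)

lemma qint_prod:
  assumes "q \<noteq> 1"
  shows "qint q n * qint q (n + 1) = poly (RR q) (q ^ n) / (1 - q) ^ 2"
  using assms unfolding qint_def poly_RR by (simp add: power2_eq_square field_simps)

lemma rhsP_poly:
  assumes q: "0 < q" "q < 1"
  shows "(\<Sum>k=0..m. (- (q ^ n)) ^ (m - k) * qfact q k / qfact q (m+1)
                * evalZ (P (m - k)) q * (qint q n * qint q (n+1)) ^ (k+1) / qint q 2)
       = poly (GPp m P q) (q ^ n)"
  unfolding poly_GPp atMost_atLeast0
proof (rule sum.cong[OF refl])
  fix k
  define R where "R = poly (RR q) (q ^ n)"
  have q1: "1 - q \<noteq> 0" using q by simp
  have e0: "qint q n * qint q (n + 1) = R / (1 - q) ^ 2" unfolding R_def using q by (intro qint_prod) simp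
  have e: "(qint q n * qint q (n + 1)) ^ (k + 1) = R ^ (k + 1) / (1 - q) ^ (2 * (k + 1))"
    unfolding e0 by (simp only: power_divide power_mult)
  show "(- (q ^ n)) ^ (m - k) * qfact q k / qfact q (m+1) * evalZ (P (m - k)) q
          * (qint q n * qint q (n+1)) ^ (k+1) / qint q 2
       = betaP m P q k * ((q ^ n) ^ (m - k) * poly (RR q) (q ^ n) * poly (RR q) (q ^ n) ^ k)"
    unfolding e R_def[symmetric] betaP_def power_minus[of "q ^ n"]
    by (simp add: divide_inverse inverse_mult_distrib mult_ac)
qed

lemma Fx_FPp:
  assumes s: "0 < s" "s < 1"
  shows "Fx (2 * m + 1) s (s ^ n) = poly (FPp m s) ((s ^ 2) ^ n)"
proof -
  have a: "(s ^ n) ^ (2 * m + 1 + 1) = ((s ^ 2) ^ n) ^ (m + 1)"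
    by (simp only: power_mult[symmetric] mult_ac) simp
  have b: "(s ^ n) ^ (2 * j) = ((s ^ 2) ^ n) ^ j" for j
    by (simp only: power_mult[symmetric] mult_ac)
  show ?thesis unfolding Fx_def poly_FPp a b by simp
qed

lemma P_identity_D:
  assumes "P_identity m P" "n \<ge> 1" "0 < q" "q < 1"
  shows "S (2*m+1) n q =
          (\<Sum>k=0..m. (- (q ^ n)) ^ (m - k) * qfact q k / qfact q (m+1)
                * evalZ (P (m - k)) q * (qint q n * qint q (n+1)) ^ (k+1) / qint q 2)"
  using assms unfolding P_identity_def by blast

lemma P_step1:
  assumes Pid: "P_identity m P" and s: "0 < s" "s < 1"
  shows "FPp m s = GPp m P (s ^ 2)"
proof -
  have q: "0 < s ^ 2" "s ^ 2 < 1" using s by (auto simp: power_less_one_iff)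
  have "FPp m s - GPp m P (s ^ 2) = 0"
  proof (rule poly_zero_geom[OF q])
    fix n :: nat assume n: "n \<ge> 1"
    have "poly (FPp m s) ((s ^ 2) ^ n) = Fx (2 * m + 1) s (s ^ n)" by (rule Fx_FPp[OF s, symmetric])
    also have "\<dots> = S (2 * m + 1) n (s ^ 2)" by (rule S_explicit[symmetric]) (use s in auto)
    also have "\<dots> = (\<Sum>k=0..m. (- ((s^2) ^ n)) ^ (m - k) * qfact (s^2) k / qfact (s^2) (m+1)
                * evalZ (P (m - k)) (s^2) * (qint (s^2) n * qint (s^2) (n+1)) ^ (k+1) / qint (s^2) 2)"
      by (rule P_identity_D[OF Pid n q])
    also have "\<dots> = poly (GPp m P (s ^ 2)) ((s ^ 2) ^ n)" by (rule rhsP_poly[OF q])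
    finally show "poly (FPp m s - GPp m P (s ^ 2)) ((s ^ 2) ^ n) = 0" by simp
  qed
  thus ?thesis by simp
qed


lemma qint_tendsto: "(f \<longlongrightarrow> 0) F \<Longrightarrow> ((\<lambda>s. qint (f s) i) \<longlongrightarrow> qint 0 i) F"
  unfolding qint_def by (intro tendsto_intros) auto

lemma qfact_tendsto: "(f \<longlongrightarrow> 0) F \<Longrightarrow> ((\<lambda>s. qfact (f s) k) \<longlongrightarrow> qfact 0 k) F"
  unfolding qfact_def by (intro tendsto_prod qint_tendsto)

lemma evalZ_tendsto: "(f \<longlongrightarrow> 0) F \<Longrightarrow> ((\<lambda>s. evalZ p (f s)) \<longlongrightarrow> evalZ p 0) F"
  unfolding evalZ_def by (intro tendsto_intros)

lemma qint_0: "i \<ge> 1 \<Longrightarrow> qint 0 i = 1"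
  unfolding qint_def by simp

lemma qfact_0: "qfact 0 k = 1"
  unfolding qfact_def by (rule prod.neutral) (simp add: qint_0)

lemma sq_tendsto: "((\<lambda>s::real. s ^ 2) \<longlongrightarrow> 0) (at_right 0)"
proof -
  have "((\<lambda>s::real. s ^ 2) \<longlongrightarrow> 0 ^ 2) (at_right 0)" by (intro tendsto_intros)
  thus ?thesis by simp
qed

lemma betaP_tendsto: "((\<lambda>s. betaP m P (s ^ 2) k) \<longlongrightarrow> betaP m P 0 k) (at_right 0)"
  unfolding betaP_def
  by (intro tendsto_intros qfact_tendsto evalZ_tendsto qint_tendsto sq_tendsto)
     (auto simp: qfact_0 qint_0)

lemma betaP_0: "betaP m P 0 k = (-1) ^ (m - k) * evalZ (P (m - k)) 0"
  unfolding betaP_def by (simp add: qfact_0 qint_0)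

lemma P_limit_eq:
  assumes Pid: "P_identity m P"
  shows "(\<Sum>j\<le>2 * m + 2. cc (2 * m + 1) j * (if 2 * j < 2 * m + 1 + 1 then -1 else 0) * (x ^ (m + 1) - x ^ j)) / 1
       = (\<Sum>k\<le>m. betaP m P 0 k * (x ^ (m - k) * ((1 - x) * (1 - 0 * x)) * ((1 - x) * (1 - 0 * x)) ^ k))"
proof (rule tendsto_unique[OF trivial_limit_at_right_real])
  have ev: "eventually (\<lambda>s. poly (FPp m s) x = poly (GPp m P (s ^ 2)) x) (at_right 0)"
    using ev_01 by (rule eventually_mono) (simp add: P_step1[OF Pid])
  show "((\<lambda>s. poly (FPp m s) x) \<longlongrightarrow>
      (\<Sum>j\<le>2 * m + 2. cc (2 * m + 1) j * (if 2 * j < 2 * m + 1 + 1 then -1 else 0) * (x ^ (m + 1) - x ^ j)) / 1) (at_right 0)"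
    unfolding poly_FPp by (intro tendsto_intros phi_lim Dd_lim) simp
  have "((\<lambda>s. poly (GPp m P (s ^ 2)) x) \<longlongrightarrow>
      (\<Sum>k\<le>m. betaP m P 0 k * (x ^ (m - k) * ((1 - x) * (1 - 0 * x)) * ((1 - x) * (1 - 0 * x)) ^ k))) (at_right 0)"
    unfolding poly_GPp poly_RR by (intro tendsto_intros betaP_tendsto sq_tendsto)
  thus "((\<lambda>s. poly (FPp m s) x) \<longlongrightarrow>
      (\<Sum>k\<le>m. betaP m P 0 k * (x ^ (m - k) * ((1 - x) * (1 - 0 * x)) * ((1 - x) * (1 - 0 * x)) ^ k))) (at_right 0)"
    using tendsto_cong[OF ev] by blast
qed

lemma P_zero:
  assumes Pid: "P_identity m P" and j: "j \<le> m"
  shows "evalZ (P j) 0 = ball m j"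
proof -
  define a where "a j = evalZ (P j) 0" for j
  define \<kappa> where "\<kappa> = - (\<Sum>i\<le>m. cc (2 * m + 1) i)"
  have mm: "m + (m + 1) = 2 * m + 1" by simp
  have h: "(\<Sum>j\<le>m. (-1) ^ j * a j * (x ^ j * (1 - x) ^ (m + 1 - j)))
          = (\<Sum>i\<le>m. cc (m + (m + 1)) i * x ^ i) + \<kappa> * x ^ (m + 1)" for x :: real
  proof -
    have L: "(\<Sum>j\<le>2 * m + 2. cc (2 * m + 1) j * (if 2 * j < 2 * m + 1 + 1 then -1 else 0) * (x ^ (m + 1) - x ^ j)) / 1
        = (\<Sum>i\<le>m. cc (m + (m + 1)) i * x ^ i) + \<kappa> * x ^ (m + 1)"
    proof -
      have "(\<Sum>j\<le>2 * m + 2. cc (2 * m + 1) j * (if 2 * j < 2 * m + 1 + 1 then -1 else 0) * (x ^ (m + 1) - x ^ j))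
          = (\<Sum>j\<le>m. cc (2 * m + 1) j * (-1) * (x ^ (m + 1) - x ^ j))"
        by (rule sum.mono_neutral_cong_right) auto
      also have "\<dots> = (\<Sum>i\<le>m. cc (2 * m + 1) i * x ^ i) + \<kappa> * x ^ (m + 1)"
        unfolding \<kappa>_def by (simp add: sum_subtractf sum_distrib_right sum_distrib_left algebra_simps)
      finally show ?thesis unfolding mm by simp
    qed
    have G: "(\<Sum>k\<le>m. betaP m P 0 k * (x ^ (m - k) * ((1 - x) * (1 - 0 * x)) * ((1 - x) * (1 - 0 * x)) ^ k))
        = (\<Sum>j\<le>m. (-1) ^ j * a j * (x ^ j * (1 - x) ^ (m + 1 - j)))"
    proof -
      have "(\<Sum>k\<le>m. betaP m P 0 k * (x ^ (m - k) * ((1 - x) * (1 - 0 * x)) * ((1 - x) * (1 - 0 * x)) ^ k))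
          = (\<Sum>k\<le>m. (-1) ^ (m - k) * a (m - k) * (x ^ (m - k) * (1 - x) ^ (m + 1 - (m - k))))"
      proof (rule sum.cong[OF refl])
        fix k assume "k \<in> {..m}"
        hence "m + 1 - (m - k) = Suc k" by simp
        thus "betaP m P 0 k * (x ^ (m - k) * ((1 - x) * (1 - 0 * x)) * ((1 - x) * (1 - 0 * x)) ^ k)
            = (-1) ^ (m - k) * a (m - k) * (x ^ (m - k) * (1 - x) ^ (m + 1 - (m - k)))"
          unfolding betaP_0 a_def by (simp add: mult_ac)
      qed
      also have "\<dots> = (\<Sum>j\<le>m. (-1) ^ j * a j * (x ^ j * (1 - x) ^ (m + 1 - j)))"
        by (rule sum_rev_atMost[symmetric])
      finally show ?thesis .
    qed
    show ?thesis using P_limit_eq[OF Pid, of x] unfolding L G by (rule sym)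
  qed
  have "a j = ball m j" by (rule zero_analysis[of m "m + 1" a \<kappa>, OF _ h j]) simp
  thus ?thesis unfolding a_def .
qed


lemma qint_pos: "0 < q \<Longrightarrow> q < 1 \<Longrightarrow> i \<ge> 1 \<Longrightarrow> qint q i > 0"
  unfolding qint_def by (auto simp: power_less_one_iff intro!: divide_pos_pos)

lemma qfact_pos: "0 < q \<Longrightarrow> q < 1 \<Longrightarrow> qfact q k > 0"
  unfolding qfact_def by (rule prod_pos) (auto intro: qint_pos)

lemma poly_pderiv_FPp: "poly (pderiv (FPp m s)) 1
   = (\<Sum>j\<le>2 * m + 2. cc (2 * m + 1) j * phi (2 * m + 1) s j * (real (m + 1) - real j)) / Dd (2 * m + 1) s"
  unfolding FPp_def pderiv_smult pderiv_sum pderiv_diff pderiv_monom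
  by (simp add: poly_sum poly_monom)

lemma poly_pderiv_term: "poly (pderiv (monom 1 a * RR q * RR q ^ k)) 1 = (if k = 0 then q - 1 else 0)"
proof -
  have e: "monom 1 a * RR q * RR q ^ k = monom 1 a * RR q ^ Suc k" by (simp add: mult_ac)
  have r1: "poly (RR q) 1 = 0" by (simp add: poly_RR)
  have r2: "poly (pderiv (RR q)) 1 = q - 1" by (simp add: RR_def pderiv_mult pderiv_pCons algebra_simps)
  show ?thesis unfolding e pderiv_mult pderiv_power_Suc
    by (cases k) (simp_all add: r1 r2 poly_monom)
qed

lemma poly_pderiv_GPp: "poly (pderiv (GPp m P q)) 1 = betaP m P q 0 * (q - 1)"
proof -
  have "poly (pderiv (GPp m P q)) 1 = (\<Sum>k\<le>m. betaP m P q k * (if k = 0 then q - 1 else 0))"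
    unfolding GPp_def pderiv_sum pderiv_smult by (simp add: poly_sum poly_pderiv_term)
  also have "\<dots> = betaP m P q 0 * (q - 1)"
    by (simp add: if_distrib cong: if_cong)
  finally show ?thesis .
qed

lemma P_top_zero:
  assumes Pid: "P_identity m P" and m: "m \<ge> 1"
  shows "P m = 0"
proof -
  have z: "evalZ (P m) q = 0" if q: "0 < q" "q < 1" for q
  proof -
    define s where "s = sqrt q"
    have s: "0 < s" "s < 1" and qs: "q = s ^ 2" unfolding s_def using q by (auto simp: real_sqrt_lt_1_iff)
    have "poly (pderiv (FPp m s)) 1 = poly (pderiv (GPp m P q)) 1"
      unfolding qs P_step1[OF Pid s] ..
    moreover have "poly (pderiv (FPp m s)) 1 = 0"
    proof -
      have "(\<Sum>j\<le>2 * m + 2. cc (2 * m + 1) j * phi (2 * m + 1) s j * (real (m + 1) - real j))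
          = (\<Sum>j\<le>2 * m + 1 + 1. cc (2 * m + 1) j * (real (m + 1) - real j) * phi (2 * m + 1) s j)"
        by (rule sum.cong) (auto simp: mult_ac)
      also have "\<dots> = 0" by (rule pairP[OF refl m s])
      finally show ?thesis unfolding poly_pderiv_FPp by simp
    qed
    ultimately have "betaP m P q 0 * (q - 1) = 0" unfolding poly_pderiv_GPp by simp
    hence "betaP m P q 0 = 0" using q by simp
    moreover have "qfact q (m + 1) > 0" "qint q 2 > 0" "(1 - q) ^ 2 > 0" using q qfact_pos qint_pos by auto
    ultimately show ?thesis unfolding betaP_def by (simp add: qfact_0[of 0] qfact_def[of q 0])
  qed
  have "map_poly real_of_int (P m) = 0"
  proof (rule poly_ext)
    fix y
    show "poly (map_poly real_of_int (P m)) y = poly 0 y"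
      using polyfun_zero_ext[of "\<lambda>y. evalZ (P m) y" y] z unfolding evalZ_def by auto
  qed
  thus ?thesis by (simp add: map_poly_eq_0_iff)
qed


definition qp :: "real \<Rightarrow> nat \<Rightarrow> real" where
  "qp q k = (\<Sum>i<k. q ^ i)"

definition qfp :: "real \<Rightarrow> nat \<Rightarrow> real" where
  "qfp q k = (\<Prod>i=1..k. qp q i)"

lemma qint_qp: "q \<noteq> 1 \<Longrightarrow> qint q k = qp q k"
  unfolding qint_def qp_def by (simp add: sum_gp_strict)

lemma qfact_qfp: "q \<noteq> 1 \<Longrightarrow> qfact q k = qfp q k"
  unfolding qfact_def qfp_def by (simp add: qint_qp)

lemma qint_pos': "0 < q \<Longrightarrow> i \<ge> 1 \<Longrightarrow> qp q i > 0"
  unfolding qp_def by (rule sum_pos2[of _ 0]) auto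

lemma qfp_pos: "0 < q \<Longrightarrow> qfp q k > 0"
  unfolding qfp_def by (rule prod_pos) (auto intro: qint_pos')

lemma polyfun_qp [intro]: "polyfun (\<lambda>q. qp q k)"
  unfolding qp_def by (intro polyfun_sum polyfun_power polyfun_id)

lemma polyfun_qp2 [intro]: "polyfun (\<lambda>q. qp (q ^ 2) k)"
  unfolding qp_def by (intro polyfun_sum polyfun_power polyfun_id)

lemma polyfun_qfp [intro]: "polyfun (\<lambda>q. qfp q k)"
  unfolding qfp_def by (intro polyfun_prod polyfun_qp)

lemma powr_int_exp:
  assumes q: "0 < q" and kn: "k \<le> n"
  shows "q powr ((real (2 * m + 1) + 1) / 2 * (real n - real k)) = q ^ ((m + 1) * (n - k))"
proof -
  have h: "(real (2 * m + 1) + 1) / 2 * (real n - real k) = real ((m + 1) * (n - k))"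
    using kn by (simp add: of_nat_diff field_simps)
  show ?thesis by (simp only: h powr_realpow[OF q])
qed

definition Sp :: "nat \<Rightarrow> nat \<Rightarrow> real \<Rightarrow> real" where
  "Sp m n q = (\<Sum>k=1..n. qp (q ^ 2) k * qp q k ^ (2 * m) * q ^ ((m + 1) * (n - k)))"

lemma S_Sp:
  assumes q: "0 < q" "q \<noteq> 1"
  shows "S (2 * m + 1) n q = Sp m n q"
  unfolding S_def Sp_def
proof (rule sum.cong[OF refl])
  fix k assume k: "k \<in> {1..n}"
  have q2: "q ^ 2 \<noteq> 1" using q by (auto simp: power2_eq_1_iff)
  have "qint q (2 * k) / qint q 2 = qp (q ^ 2) k"
  proof -
    have "qint q (2 * k) / qint q 2 = (1 - q ^ (2 * k)) / (1 - q ^ 2)"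
      unfolding qint_def by (rule div_div_cancel) (use q in simp)
    hence "qint q (2 * k) / qint q 2 = (1 - (q ^ 2) ^ k) / (1 - q ^ 2)" by (simp only: power_mult)
    also have "\<dots> = qp (q ^ 2) k" unfolding qp_def using q2 by (simp add: sum_gp_strict)
    finally show ?thesis .
  qed
  moreover have "qint q k ^ (2 * m + 1 - 1) = qp q k ^ (2 * m)" using q by (simp add: qint_qp)
  moreover have "q powr ((real (2 * m + 1) + 1) / 2 * (real n - real k)) = q ^ ((m + 1) * (n - k))"
    using k q by (intro powr_int_exp) auto
  ultimately show "qint q (2 * k) / qint q 2 * qint q k ^ (2 * m + 1 - 1) *
        q powr ((real (2 * m + 1) + 1) / 2 * (real n - real k)) =
        qp (q ^ 2) k * qp q k ^ (2 * m) * q ^ ((m + 1) * (n - k))" by simp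
qed

definition RHSP :: "nat \<Rightarrow> (nat \<Rightarrow> int poly) \<Rightarrow> nat \<Rightarrow> real \<Rightarrow> real" where
  "RHSP m P n q = (\<Sum>k=0..m. (- (q ^ n)) ^ (m - k) * qfact q k / qfact q (m+1)
                * evalZ (P (m - k)) q * (qint q n * qint q (n+1)) ^ (k+1) / qint q 2)"

definition Rp :: "nat \<Rightarrow> (nat \<Rightarrow> int poly) \<Rightarrow> nat \<Rightarrow> real \<Rightarrow> real" where
  "Rp m P n q = (\<Sum>k=0..m. (- (q ^ n)) ^ (m - k) * qfp q k
                * evalZ (P (m - k)) q * (qp q n * qp q (n+1)) ^ (k+1))"

lemma RHSP_Rp:
  assumes q: "0 < q" "q \<noteq> 1"
  shows "qfact q (m + 1) * qint q 2 * RHSP m P n q = Rp m P n q"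
proof -
  have b: "qfp q (m + 1) > 0" by (rule qfp_pos[OF q(1)])
  have c: "qp q 2 > 0" by (rule qint_pos') (use q in auto)
  have a: "qfact q (m + 1) \<noteq> 0" "qint q 2 \<noteq> 0"
    using b c by (simp_all add: qfact_qfp[OF q(2)] qint_qp[OF q(2)])
  show ?thesis
    unfolding RHSP_def Rp_def sum_distrib_left
  proof (rule sum.cong[OF refl])
    fix k
    show "qfact q (m + 1) * qint q 2 * ((- (q ^ n)) ^ (m - k) * qfact q k / qfact q (m+1)
                * evalZ (P (m - k)) q * (qint q n * qint q (n+1)) ^ (k+1) / qint q 2)
        = (- (q ^ n)) ^ (m - k) * qfp q k * evalZ (P (m - k)) q * (qp q n * qp q (n+1)) ^ (k+1)"
      using a q by (simp add: qfact_qfp qint_qp)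
  qed
qed

lemma P_identity_DR:
  assumes "P_identity m P" "n \<ge> 1" "0 < q" "q < 1"
  shows "S (2*m+1) n q = RHSP m P n q"
  using assms unfolding P_identity_def RHSP_def by blast

lemma P_ext:
  assumes Pid: "P_identity m P" and n: "n \<ge> 1" and q: "0 < q" "q \<noteq> 1"
  shows "S (2*m+1) n q = RHSP m P n q"
proof -
  define F1 where "F1 q = qfp q (m + 1) * qp q 2 * Sp m n q" for q
  define F2 where "F2 q = Rp m P n q" for q
  have pf1: "polyfun F1" unfolding F1_def Sp_def
    by (intro polyfun_mult polyfun_sum polyfun_power polyfun_qp2 polyfun_qp polyfun_qfp polyfun_id polyfun_const)
  have pf2: "polyfun F2" unfolding F2_def Rp_def
    by (intro polyfun_mult polyfun_sum polyfun_power polyfun_qp polyfun_qfp polyfun_id polyfun_const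
        polyfun_uminus polyfun_evalZ)
  have e: "F1 t = F2 t" if t: "0 < t" "t < 1" for t
  proof -
    have t1: "t \<noteq> 1" using t by simp
    have "F1 t = qfact t (m + 1) * qint t 2 * S (2*m+1) n t"
      unfolding F1_def using t t1 S_Sp[of t m n] by (simp add: qfact_qfp qint_qp)
    also have "\<dots> = qfact t (m + 1) * qint t 2 * RHSP m P n t" using P_identity_DR[OF Pid n t] by simp
    also have "\<dots> = F2 t" unfolding F2_def by (rule RHSP_Rp) (use t in auto)
    finally show ?thesis .
  qed
  have "F1 q = F2 q" by (rule polyfun_eq_ext[OF pf1 pf2 e])
  hence "qfact q (m + 1) * qint q 2 * S (2*m+1) n q = qfact q (m + 1) * qint q 2 * RHSP m P n q"
    unfolding F1_def F2_def RHSP_Rp[OF q] using q S_Sp[of q m n] by (simp add: qfact_qfp qint_qp)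
  moreover have "qfact q (m + 1) * qint q 2 \<noteq> 0"
  proof -
    have b: "qfp q (m + 1) > 0" by (rule qfp_pos[OF q(1)])
    have c: "qp q 2 > 0" by (rule qint_pos') (use q in auto)
    show ?thesis using b c by (simp add: qfact_qfp[OF q(2)] qint_qp[OF q(2)])
  qed
  ultimately show ?thesis by simp
qed


definition Tn :: "nat \<Rightarrow> nat" where
  "Tn k = (\<Sum>i=1..k. i - 1)"

lemma Tn_Suc: "Tn (Suc k) = Tn k + k"
  unfolding Tn_def by simp

lemma Tn_mono: "k \<le> l \<Longrightarrow> Tn k \<le> Tn l"
  unfolding Tn_def by (rule sum_mono2) auto

lemma qfact_Suc: "qfact q (Suc k) = qfact q k * qint q (Suc k)"
  unfolding qfact_def by (simp add: prod.cl_ivl_Suc)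

lemma qint_inv:
  assumes q: "0 < q" "q \<noteq> 1"
  shows "qint (1 / q) j = qint q j / q ^ (j - 1)"
proof (cases j)
  case 0 thus ?thesis by (simp add: qint_def)
next
  case (Suc i)
  have q1: "1 - q \<noteq> 0" "q - 1 \<noteq> 0" using q by auto
  show ?thesis unfolding qint_def Suc using q q1 by (simp add: field_simps power_divide)
qed

lemma qfact_inv:
  assumes q: "0 < q" "q \<noteq> 1"
  shows "qfact (1 / q) k = qfact q k / q ^ Tn k"
proof (induction k)
  case 0 thus ?case by (simp add: qfact_def Tn_def)
next
  case (Suc k)
  show ?case unfolding qfact_Suc Suc.IH qint_inv[OF q] Tn_Suc using q
    by (simp add: power_add field_simps)
qed

lemma RR_inv:
  assumes q: "0 < q"
  shows "poly (RR (1 / q)) ((1 / q) ^ n) = poly (RR q) (q ^ n) / (q * (q ^ n) ^ 2)"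
  unfolding poly_RR using q by (simp add: field_simps power_divide power2_eq_square)

lemma qp_inv:
  assumes q: "0 < q"
  shows "qp (1 / q) k = qp q k / q ^ (k - 1)"
proof (cases "q = 1")
  case True thus ?thesis by simp
next
  case False
  have "qp (1 / q) k = qint (1 / q) k" using False q by (simp add: qint_qp)
  also have "\<dots> = qint q k / q ^ (k - 1)" by (rule qint_inv[OF q False])
  also have "\<dots> = qp q k / q ^ (k - 1)" using False by (simp add: qint_qp)
  finally show ?thesis .
qed

lemma Sp_inv:
  assumes q: "0 < q"
  shows "q ^ ((2 * m + 2) * n) * Sp m n (1 / q) = q ^ (2 * m + 2) * Sp m n q"
  unfolding Sp_def sum_distrib_left
proof (rule sum.cong[OF refl])
  fix k assume k: "k \<in> {1..n}"
  then obtain k' d where kd: "k = Suc k'" "n = k + d" by (metis atLeastAtMost_iff le_Suc_ex not0_implies_Suc not_one_le_zero)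
  have nk: "n - k = d" "k - 1 = k'" using kd by auto
  have ex: "(2 * m + 2) * n = (2 * m + 2) + (m + 1) * d + (m + 1) * d + 2 * k' + k' * (2 * m)"
    unfolding kd by (simp add: algebra_simps)
  have pw: "q ^ ((2 * m + 2) * n) = q ^ (2 * m + 2) * q ^ ((m + 1) * d) * q ^ ((m + 1) * d) * (q ^ 2) ^ k' * (q ^ k') ^ (2 * m)"
    unfolding ex by (simp only: power_add power_mult)
  have a: "(1 / q) ^ 2 = 1 / q ^ 2" by (simp add: power_divide)
  have L: "qp ((1 / q) ^ 2) k * qp (1 / q) k ^ (2 * m) * (1 / q) ^ ((m + 1) * d)
      = qp (q ^ 2) k * qp q k ^ (2 * m) / ((q ^ 2) ^ k' * (q ^ k') ^ (2 * m) * q ^ ((m + 1) * d))"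
  proof -
    have q2: "0 < q ^ 2" using q by simp
    show ?thesis unfolding a qp_inv[OF q] qp_inv[OF q2] nk using q by (simp add: power_divide)
  qed
  have aux: "Y * W * Z \<noteq> 0 \<Longrightarrow> (c * Z * Z * Y * W) * (X / (Y * W * Z)) = c * (X * Z)" for c Z Y W X :: real
    by (simp add: field_simps)
  have nz: "(q ^ 2) ^ k' * (q ^ k') ^ (2 * m) * q ^ ((m + 1) * d) \<noteq> 0" using q by simp
  show "q ^ ((2 * m + 2) * n) * (qp ((1 / q) ^ 2) k * qp (1 / q) k ^ (2 * m) * (1 / q) ^ ((m + 1) * (n - k)))
      = q ^ (2 * m + 2) * (qp (q ^ 2) k * qp q k ^ (2 * m) * q ^ ((m + 1) * (n - k)))"
    unfolding nk L pw by (rule aux[OF nz])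
qed

lemma S_inv:
  assumes q: "0 < q" "q \<noteq> 1"
  shows "q ^ ((2 * m + 2) * n) * S (2 * m + 1) n (1 / q) = q ^ (2 * m + 2) * S (2 * m + 1) n q"
proof -
  have "1 / q \<noteq> 1" "0 < 1 / q" using q by auto
  thus ?thesis using Sp_inv[OF q(1), of m n] S_Sp[OF q, of m n] S_Sp[of "1/q" m n] by simp
qed


definition gam :: "nat \<Rightarrow> real \<Rightarrow> nat \<Rightarrow> real" where
  "gam m q k = (-1) ^ (m - k) * qfact q k / (qfact q (m + 1) * (1 - q) ^ (2 * (k + 1)) * qint q 2)"

lemma betaP_gam: "betaP m P q k = gam m q k * evalZ (P (m - k)) q"
  unfolding betaP_def gam_def by (simp add: divide_inverse inverse_mult_distrib mult_ac)

lemma gam_nz: "0 < q \<Longrightarrow> q < 1 \<Longrightarrow> gam m q k \<noteq> 0"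
proof -
  assume q: "0 < q" "q < 1"
  have "qfact q k > 0" "qfact q (m + 1) > 0" "qint q 2 > 0" using qfact_pos[OF q] qint_pos[OF q] by auto
  thus ?thesis unfolding gam_def using q by simp
qed

lemma rhsP_poly':
  assumes q: "q \<noteq> 1"
  shows "RHSP m P n q = poly (GPp m P q) (q ^ n)"
  unfolding poly_GPp RHSP_def atMost_atLeast0
proof (rule sum.cong[OF refl])
  fix k
  define R where "R = poly (RR q) (q ^ n)"
  have e0: "qint q n * qint q (n + 1) = R / (1 - q) ^ 2" unfolding R_def using q by (intro qint_prod) simp
  have e: "(qint q n * qint q (n + 1)) ^ (k + 1) = R ^ (k + 1) / (1 - q) ^ (2 * (k + 1))"
    unfolding e0 by (simp only: power_divide power_mult)
  show "(- (q ^ n)) ^ (m - k) * qfact q k / qfact q (m+1) * evalZ (P (m - k)) q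
          * (qint q n * qint q (n+1)) ^ (k+1) / qint q 2
       = betaP m P q k * ((q ^ n) ^ (m - k) * poly (RR q) (q ^ n) * poly (RR q) (q ^ n) ^ k)"
    unfolding e R_def[symmetric] betaP_def power_minus[of "q ^ n"]
    by (simp add: divide_inverse inverse_mult_distrib mult_ac)
qed

lemma abs1:
  fixes sg a A b Bq E C D i2 q :: real
  assumes "A \<noteq> 0" "b \<noteq> 0" "Bq \<noteq> 0" "C \<noteq> 0" "D \<noteq> 0" "i2 \<noteq> 0" "q \<noteq> 0"
  shows "sg * (a / A) / (b / Bq) * E / ((C / D) * (i2 / q)) * A = sg * a / (b * C * i2) * (Bq * D * q) * E"
  using assms by (simp add: field_simps)

lemma betaP_inv:
  assumes q: "0 < q" "q < 1"
  shows "betaP m P (1 / q) k * q ^ Tn k = gam m q k * (q ^ Tn (m + 1) * q ^ (2 * (k + 1)) * q) * evalZ (P (m - k)) (1 / q)"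
proof -
  have q1: "q \<noteq> 1" using q by simp
  have i2: "qint (1 / q) 2 = qint q 2 / q" using qint_inv[OF q(1) q1, of 2] by simp
  have c: "(1 - 1 / q) ^ (2 * (k + 1)) = (1 - q) ^ (2 * (k + 1)) / q ^ (2 * (k + 1))"
  proof -
    have "(1 - 1 / q) ^ 2 = (1 - q) ^ 2 / q ^ 2" using q by (simp add: field_simps power2_eq_square)
    hence "((1 - 1 / q) ^ 2) ^ (k + 1) = ((1 - q) ^ 2 / q ^ 2) ^ (k + 1)" by simp
    thus ?thesis by (simp only: power_mult[symmetric] power_divide)
  qed
  have nz: "q ^ Tn k \<noteq> 0" "qfact q (m + 1) \<noteq> 0" "q ^ Tn (m + 1) \<noteq> 0" "(1 - q) ^ (2 * (k + 1)) \<noteq> 0"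
      "q ^ (2 * (k + 1)) \<noteq> 0" "qint q 2 \<noteq> 0" "q \<noteq> 0"
    using q qfact_pos[OF q, of "m+1"] qint_pos[OF q, of 2] by auto
  show ?thesis
    unfolding betaP_def qfact_inv[OF q(1) q1] i2 c abs1[OF nz] gam_def by (simp add: mult_ac)
qed

lemma abs2:
  fixes xd Y Q0 X Q1 QB g E R :: real
  assumes "xd \<noteq> 0" "Y \<noteq> 0" "Q0 \<noteq> 0" and h: "X * Q1 = xd * xd * Y * Y ^ k * Q0 * QB"
  shows "X * (g * Q1 * E / Q0 * (1 / xd * (R / Y) * (R / Y) ^ k)) = g * (QB * E) * (xd * R * R ^ k)"
proof -
  have Yk: "Y ^ k \<noteq> 0" using assms by simp
  have "X * (g * Q1 * E / Q0 * (1 / xd * (R / Y) * (R / Y) ^ k)) = (X * Q1) * (g * E * R * R ^ k) / (Q0 * xd * Y * Y ^ k)"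
    using assms Yk by (simp add: field_simps power_divide)
  also have "\<dots> = (xd * xd * Y * Y ^ k * Q0 * QB) * (g * E * R * R ^ k) / (Q0 * xd * Y * Y ^ k)" unfolding h ..
  also have "\<dots> = g * (QB * E) * (xd * R * R ^ k)" using assms Yk by (simp add: field_simps)
  finally show ?thesis .
qed

definition BP :: "nat \<Rightarrow> nat \<Rightarrow> nat" where
  "BP m k = Tn (m + 1) + k + 2 - Tn k"

lemma term_inv:
  assumes q: "0 < q" "q < 1" and k: "k \<le> m"
  shows "q ^ ((2 * m + 2) * n) * (betaP m P (1 / q) k * (((1 / q) ^ n) ^ (m - k) * poly (RR (1 / q)) ((1 / q) ^ n)
           * poly (RR (1 / q)) ((1 / q) ^ n) ^ k))
       = gam m q k * (q ^ BP m k * evalZ (P (m - k)) (1 / q)) * ((q ^ n) ^ (m - k) * poly (RR q) (q ^ n) * poly (RR q) (q ^ n) ^ k)"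
proof -
  define x where "x = q ^ n"
  define d where "d = m - k"
  define Y where "Y = q * x ^ 2"
  have x0: "x \<noteq> 0" "x ^ d \<noteq> 0" "Y \<noteq> 0" "q ^ Tn k \<noteq> 0" unfolding x_def Y_def using q by auto
  have b: "betaP m P (1 / q) k = gam m q k * (q ^ Tn (m + 1) * q ^ (2 * (k + 1)) * q) * evalZ (P (m - k)) (1 / q) / q ^ Tn k"
    using betaP_inv[OF q, of m P k] x0 by (simp add: field_simps)
  have rr: "poly (RR (1 / q)) ((1 / q) ^ n) = poly (RR q) x / Y" unfolding Y_def x_def by (rule RR_inv[OF q(1)])
  have xn: "((1 / q) ^ n) ^ d = 1 / x ^ d" unfolding x_def by (simp add: power_divide)
  have X: "q ^ ((2 * m + 2) * n) = x ^ (2 * m + 2)" unfolding x_def by (simp only: power_mult[symmetric] mult.commute)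
  have TT: "Tn k \<le> Tn (m + 1)" using k by (intro Tn_mono) simp
  have pw: "x ^ (2 * m + 2) * (q ^ Tn (m + 1) * q ^ (2 * (k + 1)) * q) = x ^ d * x ^ d * Y * Y ^ k * q ^ Tn k * q ^ BP m k"
  proof -
    have e1: "2 * m + 2 = d + d + 2 * (k + 1)" unfolding d_def using k by simp
    have e2: "Tn (m + 1) + 2 * (k + 1) + 1 = (k + 1) + Tn k + BP m k" unfolding BP_def using TT by simp
    have "Y * Y ^ k = Y ^ (k + 1)" by simp
    also have "\<dots> = q ^ (k + 1) * (x ^ 2) ^ (k + 1)" unfolding Y_def by (rule power_mult_distrib)
    also have "(x ^ 2) ^ (k + 1) = x ^ (2 * (k + 1))" by (rule power_mult[symmetric])
    finally have A: "Y * Y ^ k = q ^ (k + 1) * x ^ (2 * (k + 1))" .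
    have B: "x ^ (2 * m + 2) = x ^ d * x ^ d * x ^ (2 * (k + 1))" unfolding e1 by (simp only: power_add)
    have C: "q ^ Tn (m + 1) * q ^ (2 * (k + 1)) * q = q ^ (k + 1) * q ^ Tn k * q ^ BP m k"
      by (simp only: power_add[symmetric] power_Suc2[symmetric] e2[symmetric] Suc_eq_plus1)
    have D: "x ^ d * x ^ d * Y * Y ^ k * q ^ Tn k * q ^ BP m k = x ^ d * x ^ d * (Y * Y ^ k) * q ^ Tn k * q ^ BP m k"
      by (simp only: mult.assoc)
    show ?thesis unfolding B C D A by (simp only: mult_ac)
  qed
  show ?thesis unfolding X b rr d_def[symmetric] xn x_def[symmetric]
    by (rule abs2[OF x0(2) x0(3) x0(4) pw])
qed


lemma P_reflect:
  assumes Pid: "P_identity m P" and k: "k \<le> m" and q: "0 < q" "q < 1"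
  shows "q ^ (2 * m + 2) * evalZ (P (m - k)) q = q ^ BP m k * evalZ (P (m - k)) (1 / q)"
proof -
  have q1: "q \<noteq> 1" using q by simp
  define c where "c k' = gam m q k' * (q ^ (2 * m + 2) * evalZ (P (m - k')) q - q ^ BP m k' * evalZ (P (m - k')) (1 / q))" for k'
  define Z where "Z = (\<Sum>k'\<le>m. smult (c k') (monom 1 (m - k') * RR q * RR q ^ k'))"
  have "Z = 0"
  proof (rule poly_zero_geom[OF q])
    fix n :: nat assume n: "n \<ge> 1"
    define W where "W k' = (q ^ n) ^ (m - k') * poly (RR q) (q ^ n) * poly (RR q) (q ^ n) ^ k'" for k'
    have e1: "(\<Sum>k'\<le>m. gam m q k' * evalZ (P (m - k')) q * W k') = S (2 * m + 1) n q"
    proof -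
      have "(\<Sum>k'\<le>m. gam m q k' * evalZ (P (m - k')) q * W k') = poly (GPp m P q) (q ^ n)"
        unfolding poly_GPp W_def betaP_gam ..
      also have "\<dots> = RHSP m P n q" by (rule rhsP_poly'[OF q1, symmetric])
      also have "\<dots> = S (2 * m + 1) n q" by (rule P_identity_DR[OF Pid n q, symmetric])
      finally show ?thesis .
    qed
    have e2: "(\<Sum>k'\<le>m. gam m q k' * (q ^ BP m k' * evalZ (P (m - k')) (1 / q)) * W k') = q ^ (2 * m + 2) * S (2 * m + 1) n q"
    proof -
      have "(\<Sum>k'\<le>m. gam m q k' * (q ^ BP m k' * evalZ (P (m - k')) (1 / q)) * W k')
          = (\<Sum>k'\<le>m. q ^ ((2 * m + 2) * n) * (betaP m P (1 / q) k' * (((1 / q) ^ n) ^ (m - k') * poly (RR (1 / q)) ((1 / q) ^ n)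
           * poly (RR (1 / q)) ((1 / q) ^ n) ^ k')))"
        unfolding W_def by (rule sum.cong[OF refl]) (rule term_inv[OF q, symmetric], simp)
      also have "\<dots> = q ^ ((2 * m + 2) * n) * poly (GPp m P (1 / q)) ((1 / q) ^ n)"
        unfolding poly_GPp sum_distrib_left ..
      also have "\<dots> = q ^ ((2 * m + 2) * n) * RHSP m P n (1 / q)"
        using rhsP_poly'[of "1 / q" m P n] q1 q by simp
      also have "\<dots> = q ^ ((2 * m + 2) * n) * S (2 * m + 1) n (1 / q)"
        using P_ext[OF Pid n, of "1 / q"] q1 q by simp
      also have "\<dots> = q ^ (2 * m + 2) * S (2 * m + 1) n q" by (rule S_inv[OF q(1) q1])
      finally show ?thesis .
    qed
    have "poly Z (q ^ n) = (\<Sum>k'\<le>m. c k' * W k')"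
      unfolding Z_def W_def by (simp add: poly_sum poly_monom mult_ac)
    also have "\<dots> = q ^ (2 * m + 2) * (\<Sum>k'\<le>m. gam m q k' * evalZ (P (m - k')) q * W k')
                  - (\<Sum>k'\<le>m. gam m q k' * (q ^ BP m k' * evalZ (P (m - k')) (1 / q)) * W k')"
      unfolding c_def sum_distrib_left sum_subtractf[symmetric] by (rule sum.cong[OF refl]) (simp add: algebra_simps)
    also have "\<dots> = 0" unfolding e1 e2 by simp
    finally show "poly Z (q ^ n) = 0" .
  qed
  hence "\<forall>k'\<le>m. c k' = 0"
    unfolding Z_def by (intro lin_indep[of "RR q" "RR q" c m]) (auto simp: poly_RR)
  hence "c k = 0" using k by simp
  thus ?thesis unfolding c_def using gam_nz[OF q, of m k] by simp
qed

lemma P_sym: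
  assumes Pid: "P_identity m P" and k: "k \<le> m"
  shows "symmetric_coeffs (P k)"
proof (cases "k = m \<and> m \<ge> 1")
  case True
  hence "P k = 0" using P_top_zero[OF Pid] by simp
  thus ?thesis by (simp add: symmetric_coeffs_def)
next
  case False
  hence km: "k < m \<or> m = 0" using k by auto
  have "evalZ (P k) 0 = ball m k" by (rule P_zero[OF Pid k])
  moreover have "ball m k \<noteq> 0"
    using km ball_pos[of k m] k by (auto simp: ball_def)
  ultimately have P0: "poly (map_poly real_of_int (P k)) 0 \<noteq> 0" by (simp add: evalZ_def)
  have mk: "m - (m - k) = k" using k by simp
  have "reflect_poly (map_poly real_of_int (P k)) = map_poly real_of_int (P k)"
  proof (rule reflect_from_identity[OF P0])
    fix q :: real assume q: "0 < q" "q < 1"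
    show "q ^ (2 * m + 2) * poly (map_poly real_of_int (P k)) q = q ^ BP m (m - k) * poly (map_poly real_of_int (P k)) (1 / q)"
      using P_reflect[OF Pid _ q, of "m - k"] unfolding mk evalZ_def by simp
  qed
  thus ?thesis by (rule symmetric_from_reflect)
qed


definition prodQ :: "nat \<Rightarrow> real \<Rightarrow> nat \<Rightarrow> real" where
  "prodQ m t j = (\<Prod>i=0..j. (1 - t ^ (2 * (m - i) + 1)))"

definition betaQ :: "nat \<Rightarrow> (nat \<Rightarrow> int poly) \<Rightarrow> real \<Rightarrow> nat \<Rightarrow> real" where
  "betaQ m Q t k = (-1) ^ (m - k) * (1 - t) ^ (m - k) * evalZ (Q (m - k)) t / prodQ m t (m - k)
                    / ((1 - t ^ 2) ^ (2 * k) * qint (t ^ 2) 2)"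

definition GQp :: "nat \<Rightarrow> (nat \<Rightarrow> int poly) \<Rightarrow> real \<Rightarrow> real poly" where
  "GQp m Q t = (\<Sum>k\<le>m. smult (betaQ m Q t k) (monom 1 (m - k) * [:1, -t:] * RR (t ^ 2) ^ k))"

definition FQp :: "nat \<Rightarrow> real \<Rightarrow> real poly" where
  "FQp m t = smult (- 1 / Dd (2 * m) t) (\<Sum>j\<le>2 * m + 1. smult (cc (2 * m) j * phi (2 * m) t j) (monom 1 j))"

definition RHSQ :: "nat \<Rightarrow> (nat \<Rightarrow> int poly) \<Rightarrow> nat \<Rightarrow> real \<Rightarrow> real" where
  "RHSQ m Q n t = (1 - t ^ (2 * n + 1)) *
          (\<Sum>k=0..m. (- ((t ^ 2) ^ n)) ^ (m - k) * (1 - t) ^ (m - k)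
                * evalZ (Q (m - k)) t / prodQ m t (m - k)
                * (qint (t ^ 2) n * qint (t ^ 2) (n+1)) ^ k / qint (t ^ 2) 2)"

lemma poly_GQp: "poly (GQp m Q t) x
   = (\<Sum>k\<le>m. betaQ m Q t k * (x ^ (m - k) * (1 - t * x) * poly (RR (t ^ 2)) x ^ k))"
  unfolding GQp_def poly_sum by (rule sum.cong[OF refl]) (simp add: poly_monom algebra_simps)

lemma poly_FQp: "poly (FQp m t) x = - 1 / Dd (2 * m) t * (\<Sum>j\<le>2 * m + 1. cc (2 * m) j * phi (2 * m) t j * x ^ j)"
  unfolding FQp_def by (simp add: poly_sum poly_monom)

lemma powr_half:
  fixes t :: real
  assumes t: "0 < t" shows "(t ^ 2) powr (real a + 1 / 2) = t ^ (2 * a + 1)"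
proof -
  have "(t ^ 2) powr (real a + 1 / 2) = (t powr 2) powr (real a + 1 / 2)" using t by (simp add: powr_numeral)
  also have "\<dots> = t powr (2 * (real a + 1 / 2))" by (simp add: powr_powr)
  also have "2 * (real a + 1 / 2) = real (2 * a + 1)" by simp
  also have "t powr real (2 * a + 1) = t ^ (2 * a + 1)" by (rule powr_realpow[OF t])
  finally show ?thesis .
qed

lemma powr_half0:
  fixes t :: real
  assumes t: "0 < t" shows "(t ^ 2) powr (1 / 2) = t"
  using powr_half[OF t, of 0] by simp

lemma Q_identity_D:
  assumes Qid: "Q_identity m Q" and n: "n \<ge> 1" and t: "0 < t" "t < 1"
  shows "S (2 * m) n (t ^ 2) = RHSQ m Q n t"
proof -
  have q: "0 < t ^ 2" "t ^ 2 < 1" using t by (auto simp: power_less_one_iff)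
  have "S (2 * m) n (t ^ 2) = (1 - (t ^ 2) powr (real n + 1/2)) *
          (\<Sum>k=0..m. (- ((t ^ 2) ^ n)) ^ (m - k) * (1 - (t ^ 2) powr (1/2)) ^ (m - k)
                * evalZ (Q (m - k)) ((t ^ 2) powr (1/2))
                / (\<Prod>i=0..m-k. (1 - (t ^ 2) powr (real (m - i) + 1/2)))
                * (qint (t ^ 2) n * qint (t ^ 2) (n+1)) ^ k / qint (t ^ 2) 2)"
    using Qid n q unfolding Q_identity_def by blast
  also have "\<dots> = RHSQ m Q n t"
    unfolding powr_half[OF t(1)] powr_half0[OF t(1)] RHSQ_def prodQ_def ..
  finally show ?thesis .
qed

lemma Fx_FQp:
  assumes m: "m \<ge> 1" and t: "0 < t" "t < 1"
  shows "Fx (2 * m) t (t ^ n) = poly (FQp m t) ((t ^ 2) ^ n)"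
proof -
  have z: "(\<Sum>j\<le>2 * m + 1. cc (2 * m) j * phi (2 * m) t j) = 0" by (rule pairQ) (use m t in auto)
  have b: "(t ^ n) ^ (2 * j) = ((t ^ 2) ^ n) ^ j" for j
    by (simp only: power_mult pow_swap[of t n 2])
  have "Fx (2 * m) t (t ^ n) = ((t ^ n) ^ (2 * m + 1) * (\<Sum>j\<le>2 * m + 1. cc (2 * m) j * phi (2 * m) t j)
          - (\<Sum>j\<le>2 * m + 1. cc (2 * m) j * phi (2 * m) t j * (t ^ n) ^ (2 * j))) / Dd (2 * m) t"
    unfolding Fx_def sum_distrib_left sum_subtractf[symmetric] by (simp add: algebra_simps)
  also have "\<dots> = - 1 / Dd (2 * m) t * (\<Sum>j\<le>2 * m + 1. cc (2 * m) j * phi (2 * m) t j * (t ^ n) ^ (2 * j))"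
  proof -
    have g: "\<And>A B D::real. (A * 0 - B) / D = - 1 / D * B" by simp
    show ?thesis unfolding z by (rule g)
  qed
  also have "\<dots> = poly (FQp m t) ((t ^ 2) ^ n)" unfolding poly_FQp b ..
  finally show ?thesis .
qed

lemma rhsQ_poly:
  assumes t: "0 < t" "t \<noteq> 1"
  shows "RHSQ m Q n t = poly (GQp m Q t) ((t ^ 2) ^ n)"
proof -
  define x where "x = (t ^ 2) ^ n"
  define R where "R = poly (RR (t ^ 2)) x"
  have t2: "t ^ 2 \<noteq> 1" using t by (auto simp: power2_eq_1_iff)
  have e0: "qint (t ^ 2) n * qint (t ^ 2) (n + 1) = R / (1 - t ^ 2) ^ 2"
    unfolding R_def x_def by (rule qint_prod[OF t2])
  have e: "(qint (t ^ 2) n * qint (t ^ 2) (n + 1)) ^ k = R ^ k / (1 - t ^ 2) ^ (2 * k)" for k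
    unfolding e0 by (simp only: power_divide power_mult)
  have tx: "t ^ (2 * n + 1) = t * x"
  proof -
    have "t ^ (2 * n + 1) = t ^ (2 * n) * t" by simp
    also have "t ^ (2 * n) = (t ^ 2) ^ n" by (rule power_mult)
    finally show ?thesis unfolding x_def by simp
  qed
  show ?thesis
    unfolding RHSQ_def poly_GQp x_def[symmetric] R_def[symmetric] tx sum_distrib_left atMost_atLeast0
  proof (rule sum.cong[OF refl])
    fix k
    show "(1 - t * x) * ((- x) ^ (m - k) * (1 - t) ^ (m - k) * evalZ (Q (m - k)) t / prodQ m t (m - k)
            * (qint (t ^ 2) n * qint (t ^ 2) (n + 1)) ^ k / qint (t ^ 2) 2)
        = betaQ m Q t k * (x ^ (m - k) * (1 - t * x) * R ^ k)"
      unfolding e betaQ_def power_minus[of x] by (simp add: divide_inverse inverse_mult_distrib mult_ac)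
  qed
qed

lemma Q_step1:
  assumes Qid: "Q_identity m Q" and m: "m \<ge> 1" and t: "0 < t" "t < 1"
  shows "FQp m t = GQp m Q t"
proof -
  have q: "0 < t ^ 2" "t ^ 2 < 1" using t by (auto simp: power_less_one_iff)
  have "FQp m t - GQp m Q t = 0"
  proof (rule poly_zero_geom[OF q])
    fix n :: nat assume n: "n \<ge> 1"
    have "poly (FQp m t) ((t ^ 2) ^ n) = Fx (2 * m) t (t ^ n)" by (rule Fx_FQp[OF m t, symmetric])
    also have "\<dots> = S (2 * m) n (t ^ 2)" by (rule S_explicit[symmetric]) (use t m in auto)
    also have "\<dots> = RHSQ m Q n t" by (rule Q_identity_D[OF Qid n t])
    also have "\<dots> = poly (GQp m Q t) ((t ^ 2) ^ n)" by (rule rhsQ_poly) (use t in auto)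
    finally show "poly (FQp m t - GQp m Q t) ((t ^ 2) ^ n) = 0" by simp
  qed
  thus ?thesis by simp
qed


lemma betaQ_tendsto: "((\<lambda>t. betaQ m Q t k) \<longlongrightarrow> betaQ m Q 0 k) (at_right 0)"
proof -
  have id: "((\<lambda>t::real. t) \<longlongrightarrow> 0) (at_right 0)" by (rule tendsto_ident_at)
  have qt: "((\<lambda>t. qint (t ^ 2) 2) \<longlongrightarrow> qint (0 ^ 2) 2) (at_right (0::real))"
    using qint_tendsto[OF sq_tendsto, of 2] by simp
  show ?thesis unfolding betaQ_def prodQ_def
    by (intro tendsto_intros qt evalZ_tendsto id tendsto_prod)
       (auto simp: qint_0)
qed

lemma prodQ_0: "prodQ m 0 j = 1"
  unfolding prodQ_def by simp

lemma betaQ_0: "betaQ m Q 0 k = (-1) ^ (m - k) * evalZ (Q (m - k)) 0"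
  unfolding betaQ_def by (simp add: prodQ_0 qint_0)

lemma Q_limit_eq:
  assumes Qid: "Q_identity m Q" and m: "m \<ge> 1"
  shows "- 1 / 1 * (\<Sum>j\<le>2 * m + 1. cc (2 * m) j * (if 2 * j < 2 * m + 1 then -1 else 0) * x ^ j)
       = (\<Sum>k\<le>m. betaQ m Q 0 k * (x ^ (m - k) * (1 - 0 * x) * ((1 - x) * (1 - 0 ^ 2 * x)) ^ k))"
proof (rule tendsto_unique[OF trivial_limit_at_right_real])
  have ev: "eventually (\<lambda>t. poly (FQp m t) x = poly (GQp m Q t) x) (at_right 0)"
    using ev_01 by (rule eventually_mono) (simp add: Q_step1[OF Qid m])
  show "((\<lambda>t. poly (FQp m t) x) \<longlongrightarrow>
      - 1 / 1 * (\<Sum>j\<le>2 * m + 1. cc (2 * m) j * (if 2 * j < 2 * m + 1 then -1 else 0) * x ^ j)) (at_right 0)"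
    unfolding poly_FQp by (intro tendsto_intros phi_lim Dd_lim) simp
  have id: "((\<lambda>t::real. t) \<longlongrightarrow> 0) (at_right 0)" by (rule tendsto_ident_at)
  have "((\<lambda>t. poly (GQp m Q t) x) \<longlongrightarrow>
      (\<Sum>k\<le>m. betaQ m Q 0 k * (x ^ (m - k) * (1 - 0 * x) * ((1 - x) * (1 - 0 ^ 2 * x)) ^ k))) (at_right 0)"
    unfolding poly_GQp poly_RR by (intro tendsto_intros betaQ_tendsto id)
  thus "((\<lambda>t. poly (FQp m t) x) \<longlongrightarrow>
      (\<Sum>k\<le>m. betaQ m Q 0 k * (x ^ (m - k) * (1 - 0 * x) * ((1 - x) * (1 - 0 ^ 2 * x)) ^ k))) (at_right 0)"
    using tendsto_cong[OF ev] by blast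
qed

lemma Q_zero:
  assumes Qid: "Q_identity m Q" and m: "m \<ge> 1" and j: "j \<le> m"
  shows "evalZ (Q j) 0 = ball m j"
proof -
  define a where "a j = evalZ (Q j) 0" for j
  have mm: "m + m = 2 * m" by simp
  have h: "(\<Sum>j\<le>m. (-1) ^ j * a j * (x ^ j * (1 - x) ^ (m - j)))
          = (\<Sum>i\<le>m. cc (m + m) i * x ^ i) + 0 * x ^ (m + 1)" for x :: real
  proof -
    have L: "- 1 / 1 * (\<Sum>j\<le>2 * m + 1. cc (2 * m) j * (if 2 * j < 2 * m + 1 then -1 else 0) * x ^ j)
        = (\<Sum>i\<le>m. cc (m + m) i * x ^ i) + 0 * x ^ (m + 1)"
    proof -
      have "(\<Sum>j\<le>2 * m + 1. cc (2 * m) j * (if 2 * j < 2 * m + 1 then -1 else 0) * x ^ j)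
          = (\<Sum>j\<le>m. cc (2 * m) j * (-1) * x ^ j)"
        by (rule sum.mono_neutral_cong_right) auto
      thus ?thesis unfolding mm by (simp add: sum_negf)
    qed
    have G: "(\<Sum>k\<le>m. betaQ m Q 0 k * (x ^ (m - k) * (1 - 0 * x) * ((1 - x) * (1 - 0 ^ 2 * x)) ^ k))
        = (\<Sum>j\<le>m. (-1) ^ j * a j * (x ^ j * (1 - x) ^ (m - j)))"
    proof -
      have "(\<Sum>k\<le>m. betaQ m Q 0 k * (x ^ (m - k) * (1 - 0 * x) * ((1 - x) * (1 - 0 ^ 2 * x)) ^ k))
          = (\<Sum>k\<le>m. (-1) ^ (m - k) * a (m - k) * (x ^ (m - k) * (1 - x) ^ (m - (m - k))))"
      proof (rule sum.cong[OF refl])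
        fix k assume "k \<in> {..m}"
        hence "m - (m - k) = k" by simp
        thus "betaQ m Q 0 k * (x ^ (m - k) * (1 - 0 * x) * ((1 - x) * (1 - 0 ^ 2 * x)) ^ k)
            = (-1) ^ (m - k) * a (m - k) * (x ^ (m - k) * (1 - x) ^ (m - (m - k)))"
          unfolding betaQ_0 a_def by (simp add: mult_ac)
      qed
      also have "\<dots> = (\<Sum>j\<le>m. (-1) ^ j * a j * (x ^ j * (1 - x) ^ (m - j)))"
        by (rule sum_rev_atMost[symmetric])
      finally show ?thesis .
    qed
    show ?thesis using Q_limit_eq[OF Qid m, of x] unfolding L G by (rule sym)
  qed
  have "a j = ball m j" by (rule zero_analysis[of m m a 0, OF _ h j]) simp
  thus ?thesis unfolding a_def .
qed


lemma pow_ne1: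
  fixes t :: real
  assumes "0 < t" "t \<noteq> 1" "a \<ge> 1" shows "t ^ a \<noteq> 1"
proof
  assume h: "t ^ a = 1"
  show False
  proof (cases "t < 1")
    case True
    hence "t ^ a < 1" using assms by (subst power_less_one_iff) auto
    thus False using h by simp
  next
    case False
    hence "t > 1" using assms by simp
    hence "1 < t ^ a" using assms by (intro one_less_power) auto
    thus False using h by simp
  qed
qed

lemma prodQ_nz: "0 < t \<Longrightarrow> t \<noteq> 1 \<Longrightarrow> prodQ m t j \<noteq> 0"
proof -
  assume t: "0 < t" "t \<noteq> 1"
  have "\<forall>i\<in>{0..j}. 1 - t ^ (2 * (m - i) + 1) \<noteq> 0"
  proof
    fix i assume "i \<in> {0..j}"
    have "t ^ (2 * (m - i) + 1) \<noteq> 1" by (rule pow_ne1[OF t]) simp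
    thus "1 - t ^ (2 * (m - i) + 1) \<noteq> 0" by simp
  qed
  thus ?thesis unfolding prodQ_def by (simp add: prod_zero_iff del: power_Suc)
qed

lemma prodQ_split:
  assumes k: "k \<le> m"
  shows "prodQ m t m = prodQ m t (m - k) * (\<Prod>i=m-k+1..m. (1 - t ^ (2 * (m - i) + 1)))"
proof -
  have "prodQ m t m = (\<Prod>i=0..(m - k) + k. (1 - t ^ (2 * (m - i) + 1)))" unfolding prodQ_def using k by simp
  also have "\<dots> = prodQ m t (m - k) * (\<Prod>i=(m - k) + 1..(m - k) + k. (1 - t ^ (2 * (m - i) + 1)))"
    unfolding prodQ_def by (rule prod.ub_add_nat) simp
  also have "(m - k) + k = m" using k by simp
  finally show ?thesis .
qed

definition SpQ :: "nat \<Rightarrow> nat \<Rightarrow> real \<Rightarrow> real" where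
  "SpQ m n t = (\<Sum>k=1..n. qp ((t ^ 2) ^ 2) k * qp (t ^ 2) k ^ (2 * m - 1) * t ^ ((2 * m + 1) * (n - k)))"

lemma S_SpQ:
  assumes t: "0 < t" "t \<noteq> 1"
  shows "S (2 * m) n (t ^ 2) = SpQ m n t"
  unfolding S_def SpQ_def
proof (rule sum.cong[OF refl])
  fix k assume k: "k \<in> {1..n}"
  define q where "q = t ^ 2"
  have q: "0 < q" "q \<noteq> 1" unfolding q_def using t by (auto simp: power2_eq_1_iff)
  have q2: "q ^ 2 \<noteq> 1" using q by (auto simp: power2_eq_1_iff)
  have "qint q (2 * k) / qint q 2 = qp (q ^ 2) k"
  proof -
    have "qint q (2 * k) / qint q 2 = (1 - q ^ (2 * k)) / (1 - q ^ 2)"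
      unfolding qint_def by (rule div_div_cancel) (use q in simp)
    hence "qint q (2 * k) / qint q 2 = (1 - (q ^ 2) ^ k) / (1 - q ^ 2)" by (simp only: power_mult)
    also have "\<dots> = qp (q ^ 2) k" unfolding qp_def using q2 by (simp add: sum_gp_strict)
    finally show ?thesis .
  qed
  moreover have "qint q k ^ (2 * m - 1) = qp q k ^ (2 * m - 1)" using q by (simp add: qint_qp)
  moreover have "(t ^ 2) powr ((real (2 * m) + 1) / 2 * (real n - real k)) = t ^ ((2 * m + 1) * (n - k))"
    using k t by (intro powr_half_nat) auto
  ultimately show "qint (t ^ 2) (2 * k) / qint (t ^ 2) 2 * qint (t ^ 2) k ^ (2 * m - 1) *
        (t ^ 2) powr ((real (2 * m) + 1) / 2 * (real n - real k)) =
        qp ((t ^ 2) ^ 2) k * qp (t ^ 2) k ^ (2 * m - 1) * t ^ ((2 * m + 1) * (n - k))"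
    unfolding q_def by simp
qed

definition RpQ :: "nat \<Rightarrow> (nat \<Rightarrow> int poly) \<Rightarrow> nat \<Rightarrow> real \<Rightarrow> real" where
  "RpQ m Q n t = (1 - t ^ (2 * n + 1)) *
          (\<Sum>k=0..m. (- ((t ^ 2) ^ n)) ^ (m - k) * (1 - t) ^ (m - k)
                * evalZ (Q (m - k)) t * (\<Prod>i=m-k+1..m. (1 - t ^ (2 * (m - i) + 1)))
                * (qp (t ^ 2) n * qp (t ^ 2) (n+1)) ^ k)"

lemma RHSQ_RpQ:
  assumes t: "0 < t" "t \<noteq> 1"
  shows "qint (t ^ 2) 2 * prodQ m t m * RHSQ m Q n t = RpQ m Q n t"
proof -
  have t2: "t ^ 2 \<noteq> 1" "0 < t ^ 2" using t by (auto simp: power2_eq_1_iff)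
  have c: "qp (t ^ 2) 2 > 0" by (rule qint_pos') (use t2 in auto)
  have i2: "qint (t ^ 2) 2 \<noteq> 0" using c by (simp add: qint_qp[OF t2(1)])
  show ?thesis
    unfolding RHSQ_def RpQ_def sum_distrib_left mult.left_commute[of _ "1 - t ^ (2 * n + 1)"]
  proof (intro arg_cong[where f="\<lambda>x. (1 - t ^ (2 * n + 1)) * x"] sum.cong[OF refl])
    fix k assume "k \<in> {0..m}"
    hence k: "k \<le> m" by simp
    have pz: "prodQ m t (m - k) \<noteq> 0" by (rule prodQ_nz[OF t])
    show "qint (t ^ 2) 2 * prodQ m t m * ((- ((t ^ 2) ^ n)) ^ (m - k) * (1 - t) ^ (m - k)
                * evalZ (Q (m - k)) t / prodQ m t (m - k)
                * (qint (t ^ 2) n * qint (t ^ 2) (n+1)) ^ k / qint (t ^ 2) 2)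
        = (- ((t ^ 2) ^ n)) ^ (m - k) * (1 - t) ^ (m - k)
                * evalZ (Q (m - k)) t * (\<Prod>i=m-k+1..m. (1 - t ^ (2 * (m - i) + 1)))
                * (qp (t ^ 2) n * qp (t ^ 2) (n+1)) ^ k"
      unfolding prodQ_split[OF k] using pz i2 by (simp add: qint_qp[OF t2(1)])
  qed
qed

lemma Q_identity_DR:
  assumes "Q_identity m Q" "n \<ge> 1" "0 < t" "t < 1"
  shows "S (2 * m) n (t ^ 2) = RHSQ m Q n t"
  by (rule Q_identity_D[OF assms])

lemma Q_ext:
  assumes Qid: "Q_identity m Q" and n: "n \<ge> 1" and t: "0 < t" "t \<noteq> 1"
  shows "S (2 * m) n (t ^ 2) = RHSQ m Q n t"
proof -
  define F1 where "F1 t = qp (t ^ 2) 2 * prodQ m t m * SpQ m n t" for t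
  define F2 where "F2 t = RpQ m Q n t" for t
  have pf1: "polyfun F1" unfolding F1_def SpQ_def prodQ_def qp_def
    by (intro polyfun_mult polyfun_sum polyfun_prod polyfun_power polyfun_diff polyfun_id polyfun_const)
  have pf2: "polyfun F2" unfolding F2_def RpQ_def qp_def
    by (intro polyfun_mult polyfun_sum polyfun_prod polyfun_power polyfun_diff polyfun_id polyfun_const
        polyfun_uminus polyfun_evalZ)
  have e: "F1 u = F2 u" if u: "0 < u" "u < 1" for u
  proof -
    have u1: "u \<noteq> 1" "u ^ 2 \<noteq> 1" using u by (auto simp: power2_eq_1_iff)
    have "F1 u = qint (u ^ 2) 2 * prodQ m u m * S (2 * m) n (u ^ 2)"
      unfolding F1_def using S_SpQ[of u m n] u u1 by (simp add: qint_qp)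
    also have "\<dots> = qint (u ^ 2) 2 * prodQ m u m * RHSQ m Q n u" using Q_identity_DR[OF Qid n u] by simp
    also have "\<dots> = F2 u" unfolding F2_def by (rule RHSQ_RpQ) (use u in auto)
    finally show ?thesis .
  qed
  have "F1 t = F2 t" by (rule polyfun_eq_ext[OF pf1 pf2 e])
  moreover have t2: "t ^ 2 \<noteq> 1" "0 < t ^ 2" using t by (auto simp: power2_eq_1_iff)
  ultimately have "qint (t ^ 2) 2 * prodQ m t m * S (2 * m) n (t ^ 2) = qint (t ^ 2) 2 * prodQ m t m * RHSQ m Q n t"
    unfolding F1_def F2_def RHSQ_RpQ[OF t] using S_SpQ[OF t, of m n] by (simp add: qint_qp)
  moreover have "qint (t ^ 2) 2 * prodQ m t m \<noteq> 0"
  proof -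
    have c: "qp (t ^ 2) 2 > 0" by (rule qint_pos') (use t2 in auto)
    show ?thesis using c prodQ_nz[OF t] by (simp add: qint_qp[OF t2(1)])
  qed
  ultimately show ?thesis by simp
qed


lemma SpQ_inv:
  assumes t: "0 < t" and m: "m \<ge> 1"
  shows "t ^ (2 * (2 * m + 1) * n) * SpQ m n (1 / t) = t ^ (2 * (2 * m + 1)) * SpQ m n t"
  unfolding SpQ_def sum_distrib_left
proof (rule sum.cong[OF refl])
  fix k assume k: "k \<in> {1..n}"
  then obtain k' d where kd: "k = Suc k'" "n = k + d" by (metis atLeastAtMost_iff le_Suc_ex not0_implies_Suc not_one_le_zero)
  have nk: "n - k = d" "k - 1 = k'" using kd by auto
  define M where "M = 2 * m + 1"
  have ex: "2 * M * n = 2 * M + M * d + M * d + 4 * k' + 2 * k' * (2 * m - 1)"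
    unfolding kd M_def using m by (cases m) (simp_all add: algebra_simps)
  have pw: "t ^ (2 * M * n) = t ^ (2 * M) * t ^ (M * d) * t ^ (M * d) * (t ^ 4) ^ k' * ((t ^ 2) ^ k') ^ (2 * m - 1)"
    unfolding ex by (simp only: power_add power_mult)
  have a: "((1 / t) ^ 2) ^ 2 = 1 / t ^ 4" "(1 / t) ^ 2 = 1 / t ^ 2" "(t ^ 2) ^ 2 = t ^ 4"
    by (simp_all add: power_divide power_mult[symmetric])
  have L: "qp (((1 / t) ^ 2) ^ 2) k * qp ((1 / t) ^ 2) k ^ (2 * m - 1) * (1 / t) ^ (M * d)
      = qp (t ^ 4) k * qp (t ^ 2) k ^ (2 * m - 1) / ((t ^ 4) ^ k' * ((t ^ 2) ^ k') ^ (2 * m - 1) * t ^ (M * d))"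
  proof -
    have q2: "0 < t ^ 2" "0 < t ^ 4" using t by simp_all
    show ?thesis unfolding a(1) unfolding a(2) unfolding qp_inv[OF q2(1)] qp_inv[OF q2(2)] nk using t by (simp add: power_divide)
  qed
  have aux: "Y * W * Z \<noteq> 0 \<Longrightarrow> (c * Z * Z * Y * W) * (X / (Y * W * Z)) = c * (X * Z)" for c Z Y W X :: real
    by (simp add: field_simps)
  have nz: "(t ^ 4) ^ k' * ((t ^ 2) ^ k') ^ (2 * m - 1) * t ^ (M * d) \<noteq> 0" using t by simp
  show "t ^ (2 * (2 * m + 1) * n) * (qp (((1 / t) ^ 2) ^ 2) k * qp ((1 / t) ^ 2) k ^ (2 * m - 1) * (1 / t) ^ ((2 * m + 1) * (n - k)))
      = t ^ (2 * (2 * m + 1)) * (qp ((t ^ 2) ^ 2) k * qp (t ^ 2) k ^ (2 * m - 1) * t ^ ((2 * m + 1) * (n - k)))"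
    unfolding M_def[symmetric] nk L a(3) pw by (rule aux[OF nz])
qed

lemma S_invQ:
  assumes t: "0 < t" "t \<noteq> 1" and m: "m \<ge> 1"
  shows "t ^ (2 * (2 * m + 1) * n) * S (2 * m) n ((1 / t) ^ 2) = t ^ (2 * (2 * m + 1)) * S (2 * m) n (t ^ 2)"
proof -
  have "1 / t \<noteq> 1" "0 < 1 / t" using t by auto
  thus ?thesis using SpQ_inv[OF t(1) m, of n] S_SpQ[OF t, of m n] S_SpQ[of "1/t" m n] by simp
qed

definition UQ :: "nat \<Rightarrow> nat \<Rightarrow> nat" where
  "UQ m j = (\<Sum>i=0..j. 2 * (m - i) + 1)"

lemma prodQ_inv:
  assumes t: "0 < t"
  shows "prodQ m (1 / t) j = (-1) ^ (j + 1) * prodQ m t j / t ^ UQ m j"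
proof -
  have f: "1 - (1 / t) ^ a = - (1 - t ^ a) / t ^ a" for a using t by (simp add: field_simps power_divide)
  show ?thesis
proof (induction j)
  case 0
  show ?case unfolding prodQ_def UQ_def atLeastAtMost_singleton prod.insert_if sum.insert_if f by simp
next
  case (Suc j)
  have "prodQ m (1 / t) (Suc j) = prodQ m (1 / t) j * (1 - (1 / t) ^ (2 * (m - Suc j) + 1))"
    unfolding prodQ_def by simp
  also have "\<dots> = (-1) ^ (j + 1) * prodQ m t j / t ^ UQ m j * (- (1 - t ^ (2 * (m - Suc j) + 1)) / t ^ (2 * (m - Suc j) + 1))"
    unfolding Suc.IH f ..
  also have "\<dots> = (-1) ^ (Suc j + 1) * (prodQ m t j * (1 - t ^ (2 * (m - Suc j) + 1))) / (t ^ UQ m j * t ^ (2 * (m - Suc j) + 1))"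
    using t by (simp add: field_simps)
  also have "\<dots> = (-1) ^ (Suc j + 1) * prodQ m t (Suc j) / t ^ UQ m (Suc j)"
    unfolding prodQ_def UQ_def by (simp add: power_add)
  finally show ?case .
qed
qed

definition gamQ :: "nat \<Rightarrow> real \<Rightarrow> nat \<Rightarrow> real" where
  "gamQ m t k = (-1) ^ (m - k) * (1 - t) ^ (m - k) / (prodQ m t (m - k) * (1 - t ^ 2) ^ (2 * k) * qint (t ^ 2) 2)"

lemma betaQ_gam: "betaQ m Q t k = gamQ m t k * evalZ (Q (m - k)) t"
  unfolding betaQ_def gamQ_def by (simp add: divide_inverse inverse_mult_distrib mult_ac)

lemma gamQ_nz: "0 < t \<Longrightarrow> t < 1 \<Longrightarrow> gamQ m t k \<noteq> 0"
proof -
  assume t: "0 < t" "t < 1"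
  have "prodQ m t (m - k) \<noteq> 0" using prodQ_nz[of t] t by simp
  moreover have "qint (t ^ 2) 2 > 0" using t by (intro qint_pos) (auto simp: power_less_one_iff)
  moreover have "1 - t ^ 2 \<noteq> 0" using t by (auto simp: power2_eq_1_iff)
  ultimately show ?thesis unfolding gamQ_def using t by simp
qed

lemma abs1Q:
  fixes sg a A b Bq E C D i2 q td :: real
  assumes "td \<noteq> 0" "b \<noteq> 0" "Bq \<noteq> 0" "C \<noteq> 0" "D \<noteq> 0" "i2 \<noteq> 0" "q \<noteq> 0"
  shows "sg * (sg * a / td) * E / ((-1) * sg * b / Bq) / ((C / D) * (i2 / q)) * td
       = - (sg * a / (b * C * i2)) * (Bq * D * q) * E"
  using assms by (simp add: field_simps)

lemma betaQ_inv:
  assumes t: "0 < t" "t < 1"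
  shows "betaQ m Q (1 / t) k * t ^ (m - k) = - gamQ m t k * (t ^ UQ m (m - k) * t ^ (4 * k) * t ^ 2) * evalZ (Q (m - k)) (1 / t)"
proof -
  have t1: "t \<noteq> 1" "t ^ 2 \<noteq> 1" "0 < t ^ 2" using t by (auto simp: power2_eq_1_iff)
  have i2: "qint ((1 / t) ^ 2) 2 = qint (t ^ 2) 2 / t ^ 2"
  proof -
    have "(1 / t) ^ 2 = 1 / t ^ 2" by (rule power_one_over)
    hence "qint ((1 / t) ^ 2) 2 = qint (1 / t ^ 2) 2" by (simp only:)
    also have "\<dots> = qint (t ^ 2) 2 / (t ^ 2) ^ (2 - 1)" by (rule qint_inv[OF t1(3) t1(2)])
    also have "(t ^ 2) ^ (2 - 1) = t ^ 2" by simp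
    finally show ?thesis .
  qed
  have a1: "(1 - 1 / t) ^ (m - k) = (-1) ^ (m - k) * (1 - t) ^ (m - k) / t ^ (m - k)"
  proof -
    have e0: "(1 - t) / t = 1 / t - 1" using t by (simp add: diff_divide_distrib)
    have e: "1 - 1 / t = - ((1 - t) / t)" unfolding e0 by simp
    have "(- ((1 - t) / t)) ^ (m - k) = (-1) ^ (m - k) * ((1 - t) / t) ^ (m - k)" by (rule power_minus)
    thus ?thesis unfolding e power_divide by (simp only: times_divide_eq_right)
  qed
  have c: "(1 - (1 / t) ^ 2) ^ (2 * k) = (1 - t ^ 2) ^ (2 * k) / (t ^ 4) ^ k"
  proof -
    have "(1 - (1 / t) ^ 2) ^ 2 = (1 - t ^ 2) ^ 2 / t ^ 4"
    proof -
      have t2: "t ^ 2 \<noteq> 0" using t by simp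
      have "1 - (1 / t) ^ 2 = (t ^ 2 - 1) / t ^ 2" unfolding power_one_over using t2 by (simp add: diff_divide_distrib)
      hence "(1 - (1 / t) ^ 2) ^ 2 = (t ^ 2 - 1) ^ 2 / (t ^ 2) ^ 2" by (simp add: power_divide)
      also have "(t ^ 2 - 1) ^ 2 = (1 - t ^ 2) ^ 2" by (rule power2_commute)
      also have "(t ^ 2) ^ 2 = t ^ 4" by (simp only: power_mult[symmetric]) simp
      finally show ?thesis .
    qed
    hence "((1 - (1 / t) ^ 2) ^ 2) ^ k = ((1 - t ^ 2) ^ 2 / t ^ 4) ^ k" by simp
    thus ?thesis by (simp only: power_mult[symmetric] power_divide)
  qed
  have pq: "prodQ m (1 / t) (m - k) = (-1) * (-1) ^ (m - k) * prodQ m t (m - k) / t ^ UQ m (m - k)"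
    unfolding prodQ_inv[OF t(1)] power_add power_one_right by (simp only: mult_ac)
  have nz: "t ^ (m - k) \<noteq> 0" "prodQ m t (m - k) \<noteq> 0" "t ^ UQ m (m - k) \<noteq> 0" "(1 - t ^ 2) ^ (2 * k) \<noteq> 0"
      "(t ^ 4) ^ k \<noteq> 0" "qint (t ^ 2) 2 \<noteq> 0" "t ^ 2 \<noteq> 0"
  proof -
    have "t ^ 2 < 1" using t by (subst power_less_one_iff) auto
    hence "qint (t ^ 2) 2 > 0" using t1 by (intro qint_pos) auto
    moreover have "1 - t ^ 2 \<noteq> 0" using t1 by simp
    ultimately show "t ^ (m - k) \<noteq> 0" "prodQ m t (m - k) \<noteq> 0" "t ^ UQ m (m - k) \<noteq> 0" "(1 - t ^ 2) ^ (2 * k) \<noteq> 0"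
      "(t ^ 4) ^ k \<noteq> 0" "qint (t ^ 2) 2 \<noteq> 0" "t ^ 2 \<noteq> 0"
      using t prodQ_nz[of t m "m - k"] t1 by auto
  qed
  have "betaQ m Q (1 / t) k * t ^ (m - k)
      = (-1) ^ (m - k) * ((-1) ^ (m - k) * (1 - t) ^ (m - k) / t ^ (m - k)) * evalZ (Q (m - k)) (1 / t)
          / ((-1) * (-1) ^ (m - k) * prodQ m t (m - k) / t ^ UQ m (m - k))
          / (((1 - t ^ 2) ^ (2 * k) / (t ^ 4) ^ k) * (qint (t ^ 2) 2 / t ^ 2)) * t ^ (m - k)"
    unfolding betaQ_def a1 c i2 pq ..
  also have "\<dots> = - ((-1) ^ (m - k) * (1 - t) ^ (m - k) / (prodQ m t (m - k) * (1 - t ^ 2) ^ (2 * k) * qint (t ^ 2) 2))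
            * (t ^ UQ m (m - k) * (t ^ 4) ^ k * t ^ 2) * evalZ (Q (m - k)) (1 / t)"
    by (rule abs1Q[OF nz(1) nz(2) nz(3) nz(4) nz(5) nz(6) nz(7)])
  also have "(t ^ 4) ^ k = t ^ (4 * k)" by (simp only: power_mult)
  finally show ?thesis unfolding gamQ_def .
qed


definition BQ :: "nat \<Rightarrow> nat \<Rightarrow> nat" where
  "BQ m k = UQ m (m - k) + 2 * k + 1 - (m - k)"

lemma UQ_ge: "UQ m j \<ge> j + 1"
proof -
  have "(\<Sum>i=0..j. (1::nat)) \<le> UQ m j" unfolding UQ_def by (rule sum_mono) simp
  thus ?thesis by simp
qed

lemma abs3:
  fixes xd tx Y td X T1 TB g E R W :: real
  assumes "xd \<noteq> 0" "tx \<noteq> 0" "Y \<noteq> 0" "td \<noteq> 0" and h: "X * T1 = xd * xd * tx * Y ^ k * td * TB"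
  shows "X * (- g * T1 * E / td * (1 / xd * (- W / tx) * (R / Y) ^ k)) = g * (TB * E) * (xd * W * R ^ k)"
proof -
  have Yk: "Y ^ k \<noteq> 0" using assms by simp
  have "X * (- g * T1 * E / td * (1 / xd * (- W / tx) * (R / Y) ^ k)) = (X * T1) * (g * E * W * R ^ k) / (td * xd * tx * Y ^ k)"
    using assms Yk by (simp add: field_simps power_divide)
  also have "\<dots> = (xd * xd * tx * Y ^ k * td * TB) * (g * E * W * R ^ k) / (td * xd * tx * Y ^ k)" unfolding h ..
  also have "\<dots> = g * (TB * E) * (xd * W * R ^ k)" using assms Yk by (simp add: field_simps)
  finally show ?thesis .
qed

lemma termQ_inv:
  assumes t: "0 < t" "t < 1" and k: "k \<le> m"
  shows "t ^ (2 * (2 * m + 1) * n) * (betaQ m Q (1 / t) k * ((((1 / t) ^ 2) ^ n) ^ (m - k) * (1 - 1 / t * ((1 / t) ^ 2) ^ n)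
           * poly (RR ((1 / t) ^ 2)) (((1 / t) ^ 2) ^ n) ^ k))
       = gamQ m t k * (t ^ BQ m k * evalZ (Q (m - k)) (1 / t)) * (((t ^ 2) ^ n) ^ (m - k) * (1 - t * (t ^ 2) ^ n) * poly (RR (t ^ 2)) ((t ^ 2) ^ n) ^ k)"
proof -
  define x where "x = (t ^ 2) ^ n"
  define d where "d = m - k"
  define Y where "Y = t ^ 2 * x ^ 2"
  have x0: "x \<noteq> 0" "x ^ d \<noteq> 0" "t * x \<noteq> 0" "Y \<noteq> 0" "t ^ d \<noteq> 0" unfolding x_def Y_def using t by auto
  have b: "betaQ m Q (1 / t) k = - gamQ m t k * (t ^ UQ m (m - k) * t ^ (4 * k) * t ^ 2) * evalZ (Q (m - k)) (1 / t) / t ^ d"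
    using betaQ_inv[OF t, of m Q k] x0 unfolding d_def by (simp add: field_simps)
  have tt: "(1 / t) ^ 2 = 1 / t ^ 2" by (rule power_one_over)
  have y: "((1 / t) ^ 2) ^ n = 1 / x" unfolding x_def tt by (rule power_one_over)
  have rr: "poly (RR ((1 / t) ^ 2)) (1 / x) = poly (RR (t ^ 2)) x / Y"
  proof -
    have "poly (RR ((1 / t) ^ 2)) (1 / x) = poly (RR (1 / t ^ 2)) ((1 / t ^ 2) ^ n)"
      unfolding tt x_def power_one_over ..
    also have "\<dots> = poly (RR (t ^ 2)) ((t ^ 2) ^ n) / (t ^ 2 * ((t ^ 2) ^ n) ^ 2)"
      by (rule RR_inv) (use t in simp)
    finally show ?thesis unfolding Y_def x_def .
  qed
  have w: "1 - 1 / t * (1 / x) = - (1 - t * x) / (t * x)" using x0 by (simp add: field_simps)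
  have yd: "(1 / x) ^ d = 1 / x ^ d" by (rule power_one_over)
  have X: "t ^ (2 * (2 * m + 1) * n) = x ^ (2 * m + 1)" unfolding x_def
    by (simp only: power_mult[symmetric] mult_ac)
  have UU: "UQ m d \<ge> d" using UQ_ge[where m=m and j=d] by simp
  have pw: "x ^ (2 * m + 1) * (t ^ UQ m d * t ^ (4 * k) * t ^ 2) = x ^ d * x ^ d * (t * x) * Y ^ k * t ^ d * t ^ BQ m k"
  proof -
    have e1: "2 * m + 1 = d + d + 1 + 2 * k" unfolding d_def using k by simp
    have e2: "UQ m d + 4 * k + 2 = 1 + 2 * k + d + BQ m k" unfolding BQ_def d_def[symmetric] using UU by simp
    have A: "Y ^ k = t ^ (2 * k) * x ^ (2 * k)" unfolding Y_def by (simp only: power_mult_distrib power_mult)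
    have B: "x ^ (2 * m + 1) = x ^ d * x ^ d * x * x ^ (2 * k)" unfolding e1 by (simp only: power_add power_one_right)
    have "t ^ UQ m d * t ^ (4 * k) * t ^ 2 = t ^ (UQ m d + 4 * k + 2)" by (simp only: power_add)
    also have "\<dots> = t ^ (1 + 2 * k + d + BQ m k)" unfolding e2 ..
    also have "\<dots> = t * t ^ (2 * k) * t ^ d * t ^ BQ m k" by (simp only: power_add power_one_right)
    finally have C: "t ^ UQ m d * t ^ (4 * k) * t ^ 2 = t * t ^ (2 * k) * t ^ d * t ^ BQ m k" .
    show ?thesis unfolding B C A by (simp only: mult_ac)
  qed
  show ?thesis unfolding X b rr y d_def[symmetric] x_def[symmetric] yd w
    by (rule abs3[OF x0(2) x0(3) x0(4) x0(5) pw])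
qed


lemma Q_reflect:
  assumes Qid: "Q_identity m Q" and m: "m \<ge> 1" and k: "k \<le> m" and t: "0 < t" "t < 1"
  shows "t ^ (2 * (2 * m + 1)) * evalZ (Q (m - k)) t = t ^ BQ m k * evalZ (Q (m - k)) (1 / t)"
proof -
  have t1: "t \<noteq> 1" using t by simp
  have q: "0 < t ^ 2" "t ^ 2 < 1" using t by (auto simp: power_less_one_iff)
  define c where "c k' = gamQ m t k' * (t ^ (2 * (2 * m + 1)) * evalZ (Q (m - k')) t - t ^ BQ m k' * evalZ (Q (m - k')) (1 / t))" for k'
  define Z where "Z = (\<Sum>k'\<le>m. smult (c k') (monom 1 (m - k') * [:1, -t:] * RR (t ^ 2) ^ k'))"
  have "Z = 0"
  proof (rule poly_zero_geom[OF q])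
    fix n :: nat assume n: "n \<ge> 1"
    define W where "W k' = ((t ^ 2) ^ n) ^ (m - k') * (1 - t * (t ^ 2) ^ n) * poly (RR (t ^ 2)) ((t ^ 2) ^ n) ^ k'" for k'
    have e1: "(\<Sum>k'\<le>m. gamQ m t k' * evalZ (Q (m - k')) t * W k') = S (2 * m) n (t ^ 2)"
    proof -
      have "(\<Sum>k'\<le>m. gamQ m t k' * evalZ (Q (m - k')) t * W k') = poly (GQp m Q t) ((t ^ 2) ^ n)"
        unfolding poly_GQp W_def betaQ_gam ..
      also have "\<dots> = RHSQ m Q n t" by (rule rhsQ_poly[symmetric]) (use t in auto)
      also have "\<dots> = S (2 * m) n (t ^ 2)" by (rule Q_identity_D[OF Qid n t, symmetric])
      finally show ?thesis .
    qed
    have e2: "(\<Sum>k'\<le>m. gamQ m t k' * (t ^ BQ m k' * evalZ (Q (m - k')) (1 / t)) * W k') = t ^ (2 * (2 * m + 1)) * S (2 * m) n (t ^ 2)"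
    proof -
      have "(\<Sum>k'\<le>m. gamQ m t k' * (t ^ BQ m k' * evalZ (Q (m - k')) (1 / t)) * W k')
          = (\<Sum>k'\<le>m. t ^ (2 * (2 * m + 1) * n) * (betaQ m Q (1 / t) k' * ((((1 / t) ^ 2) ^ n) ^ (m - k') * (1 - 1 / t * ((1 / t) ^ 2) ^ n)
           * poly (RR ((1 / t) ^ 2)) (((1 / t) ^ 2) ^ n) ^ k')))"
        unfolding W_def by (rule sum.cong[OF refl]) (rule termQ_inv[OF t, symmetric], simp)
      also have "\<dots> = t ^ (2 * (2 * m + 1) * n) * poly (GQp m Q (1 / t)) (((1 / t) ^ 2) ^ n)"
        unfolding poly_GQp sum_distrib_left ..
      also have "\<dots> = t ^ (2 * (2 * m + 1) * n) * RHSQ m Q n (1 / t)"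
        using rhsQ_poly[of "1 / t" m Q n] t1 t by simp
      also have "\<dots> = t ^ (2 * (2 * m + 1) * n) * S (2 * m) n ((1 / t) ^ 2)"
        using Q_ext[OF Qid n, of "1 / t"] t1 t by simp
      also have "\<dots> = t ^ (2 * (2 * m + 1)) * S (2 * m) n (t ^ 2)" by (rule S_invQ[OF t(1) t1 m])
      finally show ?thesis .
    qed
    have "poly Z ((t ^ 2) ^ n) = (\<Sum>k'\<le>m. c k' * W k')"
      unfolding Z_def W_def poly_sum by (rule sum.cong[OF refl]) (simp add: poly_monom algebra_simps)
    also have "\<dots> = t ^ (2 * (2 * m + 1)) * (\<Sum>k'\<le>m. gamQ m t k' * evalZ (Q (m - k')) t * W k')
                  - (\<Sum>k'\<le>m. gamQ m t k' * (t ^ BQ m k' * evalZ (Q (m - k')) (1 / t)) * W k')"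
      unfolding c_def sum_distrib_left sum_subtractf[symmetric] by (rule sum.cong[OF refl]) (simp add: algebra_simps)
    also have "\<dots> = 0" unfolding e1 e2 by simp
    finally show "poly Z ((t ^ 2) ^ n) = 0" .
  qed
  hence "\<forall>k'\<le>m. c k' = 0"
    unfolding Z_def by (intro lin_indep[of "[:1, -t:]" "RR (t ^ 2)" c m]) (auto simp: poly_RR)
  hence "c k = 0" using k by simp
  thus ?thesis unfolding c_def using gamQ_nz[OF t, of m k] by simp
qed

lemma Q_sym:
  assumes Qid: "Q_identity m Q" and m: "m \<ge> 1" and k: "k \<le> m - 1"
  shows "symmetric_coeffs (Q k)"
proof -
  have km: "k < m" "k \<le> m" using k m by auto
  have "evalZ (Q k) 0 = ball m k" by (rule Q_zero[OF Qid m km(2)])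
  moreover have "ball m k \<noteq> 0" using ball_pos[OF km(1)] by simp
  ultimately have P0: "poly (map_poly real_of_int (Q k)) 0 \<noteq> 0" by (simp add: evalZ_def)
  have mk: "m - (m - k) = k" using km by simp
  have "reflect_poly (map_poly real_of_int (Q k)) = map_poly real_of_int (Q k)"
  proof (rule reflect_from_identity[OF P0])
    fix t :: real assume t: "0 < t" "t < 1"
    show "t ^ (2 * (2 * m + 1)) * poly (map_poly real_of_int (Q k)) t = t ^ BQ m (m - k) * poly (map_poly real_of_int (Q k)) (1 / t)"
      using Q_reflect[OF Qid m _ t, of "m - k"] unfolding mk evalZ_def by simp
  qed
  thus ?thesis by (rule symmetric_from_reflect)
qed

theorem corollary3p3:
  shows "(\<forall>m::nat. \<forall>P::nat \<Rightarrow> int poly. P_identity m P \<longrightarrow>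
            (\<forall>k\<le>m. symmetric_coeffs (P k)))
       \<and> (\<forall>m::nat. m \<ge> 1 \<longrightarrow> (\<forall>Q::nat \<Rightarrow> int poly. Q_identity m Q \<longrightarrow>
            (\<forall>k\<le>m - 1. symmetric_coeffs (Q k))))"
  using P_sym Q_sym by blast


end
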